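(* Let $(\mathcal S,\alpha)$ and $(\mathcal S',\beta)$ be IFS quasiarcs (in $\mathbb{R}^n$ and $\mathbb{R}^m$ respectively) with equal similarity dimension. Then $\alpha$ and $\beta$, with their Euclidean metrics, are bi-Lipschitz equivalent.
   Context: Let $\mathcal S=\{S_1,\dots,S_N\}$, $N\ge2$, be contracting similarities of $\mathbb{R}^n$ with ratios $r_i\in(0,1)$ and invariant set $\gamma$ (unique nonempty compact set with $\gamma=\bigcup_iS_i(\gamma)$). $(\mathcal S,\gamma)$ is an IFS path if there are $a,b$ with $S_1(a)=a$, $S_N(b)=b$, $S_i(b)=S_{i+1}(a)$ for $i=1,\dots,N-1$; an IFS arc if moreover $S_i(\gamma)\cap S_{i+1}(\gamma)=\{S_{i+1}(a)\}$ for $i=1,\dots,N-1$ and $S_i(\gamma)\cap S_j(\gamma)=\emptyset$ for $i,j\in\{1,\dots,N\}$, $|i-j|>1$; an IFS quasiarc if moreover $\gamma$ is quasisymmetrically equivalent to $[0,1]$. The similarity dimension is the $s>0$ with $\sum_i r_i^s=1$. *)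

theory Defs
  imports "HOL-Analysis.Analysis"
begin

definition similarity_with_ratio :: "('a::metric_space \<Rightarrow> 'a) \<Rightarrow> real \<Rightarrow> bool" where
  "similarity_with_ratio f c \<longleftrightarrow> (\<forall>x y. dist (f x) (f y) = c * dist x y)"

definition contracting_IFS :: "nat \<Rightarrow> (nat \<Rightarrow> 'a::euclidean_space \<Rightarrow> 'a) \<Rightarrow> (nat \<Rightarrow> real) \<Rightarrow> bool" where
  "contracting_IFS N S r \<longleftrightarrow> N \<ge> 2 \<and>
     (\<forall>i\<in>{1..N}. 0 < r i \<and> r i < 1 \<and> similarity_with_ratio (S i) (r i))"

definition invariant_set :: "nat \<Rightarrow> (nat \<Rightarrow> 'a::euclidean_space \<Rightarrow> 'a) \<Rightarrow> 'a set \<Rightarrow> bool" where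
  "invariant_set N S \<gamma> \<longleftrightarrow> \<gamma> \<noteq> {} \<and> compact \<gamma> \<and> \<gamma> = (\<Union>i\<in>{1..N}. S i ` \<gamma>)"

definition IFS_path :: "nat \<Rightarrow> (nat \<Rightarrow> 'a::euclidean_space \<Rightarrow> 'a) \<Rightarrow> (nat \<Rightarrow> real) \<Rightarrow> 'a set \<Rightarrow> bool" where
  "IFS_path N S r \<gamma> \<longleftrightarrow> contracting_IFS N S r \<and> invariant_set N S \<gamma> \<and>
     (\<exists>a b. S 1 a = a \<and> S N b = b \<and> (\<forall>i\<in>{1..<N}. S i b = S (i+1) a))"

definition IFS_arc :: "nat \<Rightarrow> (nat \<Rightarrow> 'a::euclidean_space \<Rightarrow> 'a) \<Rightarrow> (nat \<Rightarrow> real) \<Rightarrow> 'a set \<Rightarrow> bool" where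
  "IFS_arc N S r \<gamma> \<longleftrightarrow> contracting_IFS N S r \<and> invariant_set N S \<gamma> \<and>
     (\<exists>a b. S 1 a = a \<and> S N b = b \<and> (\<forall>i\<in>{1..<N}. S i b = S (i+1) a) \<and>
        (\<forall>i\<in>{1..<N}. S i ` \<gamma> \<inter> S (i+1) ` \<gamma> = {S (i+1) a}) \<and>
        (\<forall>i\<in>{1..N}. \<forall>j\<in>{1..N}. \<bar>int i - int j\<bar> > 1 \<longrightarrow> S i ` \<gamma> \<inter> S j ` \<gamma> = {}))"

definition quasisymmetric_on :: "'a::metric_space set \<Rightarrow> ('a \<Rightarrow> 'b::metric_space) \<Rightarrow> bool" where
  "quasisymmetric_on A f \<longleftrightarrow> inj_on f A \<and>
     (\<exists>\<eta>::real \<Rightarrow> real. homeomorphism {0..} {0..} \<eta> (inv_into {0..} \<eta>) \<and> strict_mono_on {0..} \<eta> \<and>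
        (\<forall>x\<in>A. \<forall>a\<in>A. \<forall>b\<in>A. \<forall>t\<ge>0. dist x a \<le> t * dist x b \<longrightarrow>
            dist (f x) (f a) \<le> \<eta> t * dist (f x) (f b)))"

definition quasisymmetrically_equivalent :: "'a::metric_space set \<Rightarrow> 'b::metric_space set \<Rightarrow> bool" where
  "quasisymmetrically_equivalent A B \<longleftrightarrow>
     (\<exists>f g. homeomorphism A B f g \<and> quasisymmetric_on A f)"

definition IFS_quasiarc :: "nat \<Rightarrow> (nat \<Rightarrow> 'a::euclidean_space \<Rightarrow> 'a) \<Rightarrow> (nat \<Rightarrow> real) \<Rightarrow> 'a set \<Rightarrow> bool" where
  "IFS_quasiarc N S r \<gamma> \<longleftrightarrow> IFS_arc N S r \<gamma> \<and> quasisymmetrically_equivalent \<gamma> ({0..1} :: real set)"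

definition similarity_dimension :: "nat \<Rightarrow> (nat \<Rightarrow> real) \<Rightarrow> real" where
  "similarity_dimension N r = (THE s. s > 0 \<and> (\<Sum>i=1..N. r i powr s) = 1)"

definition bi_lipschitz_equivalent :: "'a::metric_space set \<Rightarrow> 'b::metric_space set \<Rightarrow> bool" where
  "bi_lipschitz_equivalent A B \<longleftrightarrow>
     (\<exists>f. f ` A = B \<and> (\<exists>C>0. \<forall>x\<in>A. \<forall>y\<in>A.
        dist x y / C \<le> dist (f x) (f y) \<and> dist (f x) (f y) \<le> C * dist x y))"

end

theory Submission
  imports Defs
begin
lemma simdim:
  assumes N2: "N \<ge> 2" and rr: "\<forall>i\<in>{1..N}. 0 < r i \<and> r i < 1"
  shows "similarity_dimension N r > 0 \<and> (\<Sum>i=1..N. r i powr similarity_dimension N r) = 1"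
proof -
  define F where "F x = (\<Sum>i=1..N. r i powr x)" for x
  have ne: "{1..N} \<noteq> {}" using N2 by auto
  have strict: "F y < F x" if "x < y" for x y
    unfolding F_def by (rule sum_strict_mono) (use ne rr that in \<open>auto intro: powr_less_mono'\<close>)
  define rm where "rm = Max (r ` {1..N})"
  have rm_in: "rm \<in> r ` {1..N}" unfolding rm_def using ne by (intro Max_in) auto
  have rm1: "rm < 1" "0 < rm" using rm_in rr by auto
  have rle: "r i \<le> rm" if "i \<in> {1..N}" for i unfolding rm_def using that by (intro Max_ge) auto
  have Npos: "(0::real) < 1 / real N" using N2 by auto
  obtain n where n: "rm ^ n < 1 / real N" using real_arch_pow_inv[OF Npos rm1(1)] by blast
  have "F (real n) = (\<Sum>i=1..N. r i ^ n)" unfolding F_def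
    by (intro sum.cong refl) (use rr in \<open>auto simp: powr_realpow\<close>)
  also have "\<dots> \<le> (\<Sum>i=1..N. rm ^ n)"
    by (intro sum_mono power_mono) (use rr rle in \<open>auto simp: less_imp_le\<close>)
  also have "\<dots> = real N * rm ^ n" by simp
  also have "\<dots> < 1" using n N2 by (simp add: field_simps)
  finally have Fn: "F (real n) < 1" .
  have F0: "F 0 = real N"
  proof -
    have "F 0 = (\<Sum>i=1..N. 1::real)" unfolding F_def by (intro sum.cong refl) (use rr in fastforce)+
    thus ?thesis by simp
  qed
  have cont: "continuous_on {0..real n} F" unfolding F_def
    by (intro continuous_intros) (use rr in fastforce)+
  obtain x where x: "0 \<le> x" "x \<le> real n" "F x = 1"
    using IVT2'[of F "real n" 1 0, OF _ _ _ cont] Fn F0 N2 by force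
  have xpos: "x > 0" using x F0 N2 by (cases "x = 0") auto
  have ex: "\<exists>!s. s > 0 \<and> (\<Sum>i=1..N. r i powr s) = 1"
  proof (rule ex1I[of _ x])
    show "x > 0 \<and> (\<Sum>i=1..N. r i powr x) = 1" using xpos x unfolding F_def by auto
    fix y assume "y > 0 \<and> (\<Sum>i=1..N. r i powr y) = 1"
    hence "F y = 1" unfolding F_def by auto
    with x(3) strict show "y = x" by (metis less_irrefl neq_iff)
  qed
  show ?thesis unfolding similarity_dimension_def using theI'[OF ex] by blast
qed

lemma sim_dist: "similarity_with_ratio f c \<Longrightarrow> dist (f x) (f y) = c * dist x y"
  by (simp add: similarity_with_ratio_def)

lemma sim_cont: "similarity_with_ratio f c \<Longrightarrow> 0 \<le> c \<Longrightarrow> continuous_on A f"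
  by (rule lipschitz_on_continuous_on[of c]) (simp add: lipschitz_on_def sim_dist)

lemma sim_inj: "similarity_with_ratio f c \<Longrightarrow> 0 < c \<Longrightarrow> f x = f y \<Longrightarrow> x = y"
  using sim_dist[of f c x y] by simp

locale qarc =
  fixes N :: nat and S :: "nat \<Rightarrow> 'a::euclidean_space \<Rightarrow> 'a" and r :: "nat \<Rightarrow> real"
    and \<gamma> :: "'a set" and s :: real and a b :: 'a
  assumes N2: "N \<ge> 2"
    and rpos: "\<And>i. i \<in> {1..N} \<Longrightarrow> 0 < r i" and rlt1: "\<And>i. i\<in>{1..N} \<Longrightarrow> r i < 1"
    and sim: "\<And>i. i \<in> {1..N} \<Longrightarrow> similarity_with_ratio (S i) (r i)"
    and gne: "\<gamma> \<noteq> {}" and gcomp: "compact \<gamma>" and ginv: "\<gamma> = (\<Union>i\<in>{1..N}. S i ` \<gamma>)"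
    and spos: "s > 0" and sum1: "(\<Sum>i=1..N. r i powr s) = 1"
    and fa: "S 1 a = a" and fb: "S N b = b" and junc: "\<And>i. i \<in> {1..<N} \<Longrightarrow> S i b = S (i+1) a"
    and inter: "\<And>i. i\<in>{1..<N} \<Longrightarrow> S i ` \<gamma> \<inter> S (i+1) ` \<gamma> = {S (i+1) a}"
    and disj: "\<And>i j. i\<in>{1..N} \<Longrightarrow> j\<in>{1..N} \<Longrightarrow> \<bar>int i - int j\<bar> > 1 \<Longrightarrow> S i ` \<gamma> \<inter> S j ` \<gamma> = {}"
    and qse: "quasisymmetrically_equivalent \<gamma> {0..1::real}"
begin

definition p where "p i = r i powr s"
definition c where "c j = (\<Sum>l=1..j. p l)"
definition idx where "idx t = (LEAST i. 1 \<le> i \<and> t \<le> c i)"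

lemma Sdist: "i \<in> {1..N} \<Longrightarrow> dist (S i x) (S i y) = r i * dist x y"
  using sim sim_dist by blast

lemma Scont: "i \<in> {1..N} \<Longrightarrow> continuous_on A (S i)"
  using sim sim_cont rpos less_imp_le by blast

lemma Sinj: "i \<in> {1..N} \<Longrightarrow> S i x = S i y \<Longrightarrow> x = y"
  using sim sim_inj rpos by blast

lemma Ssub: "i \<in> {1..N} \<Longrightarrow> S i ` \<gamma> \<subseteq> \<gamma>"
  using ginv by blast

lemma gclosed: "closed \<gamma>" using gcomp compact_imp_closed by blast

lemma p_pos: "i \<in> {1..N} \<Longrightarrow> 0 < p i"
  unfolding p_def using rpos[of i] by simp

lemma p_lt1: "i \<in> {1..N} \<Longrightarrow> p i < 1"
  unfolding p_def using rpos rlt1 spos powr01_less_one by blast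

lemma p_root: "i \<in> {1..N} \<Longrightarrow> p i powr (1/s) = r i"
  unfolding p_def using rpos[of i] spos by (simp add: powr_powr)

lemma c0: "c 0 = 0" unfolding c_def by simp

lemma cN: "c N = 1" unfolding c_def p_def using sum1 by simp

lemma c_Suc: "c (Suc j) = c j + p (Suc j)" unfolding c_def by simp

lemma c_diff: "i \<in> {1..N} \<Longrightarrow> c i = c (i - 1) + p i"
  using c_Suc[of "i-1"] by simp

lemma c_mono: "i \<le> j \<Longrightarrow> j \<le> N \<Longrightarrow> c i \<le> c j"
proof (induction j)
  case 0 thus ?case by simp
next
  case (Suc j)
  show ?case
  proof (cases "i = Suc j")
    case True thus ?thesis by simp
  next
    case False
    hence "c i \<le> c j" using Suc by simp
    moreover have "0 < p (Suc j)" using Suc p_pos by simp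
    ultimately show ?thesis using c_Suc[of j] by simp
  qed
qed

lemma c_strict: "i < j \<Longrightarrow> j \<le> N \<Longrightarrow> c i < c j"
proof -
  assume ij: "i < j" "j \<le> N"
  have "c i \<le> c (j - 1)" using ij by (intro c_mono) auto
  moreover have "c j = c (j-1) + p j" using ij by (intro c_diff) auto
  moreover have "0 < p j" using ij by (intro p_pos) auto
  ultimately show ?thesis by simp
qed

lemma c_nonneg: "j \<le> N \<Longrightarrow> 0 \<le> c j" using c_mono[of 0 j] c0 by simp
lemma c_le1: "j \<le> N \<Longrightarrow> c j \<le> 1" using c_mono[of j N] cN by simp

lemma idx_props:
  assumes "t \<in> {0..1}"
  shows "idx t \<in> {1..N} \<and> c (idx t - 1) \<le> t \<and> t \<le> c (idx t)"
proof -
  let ?P = "\<lambda>i. 1 \<le> i \<and> t \<le> c i"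
  have PN: "?P N" using assms N2 cN by auto
  have P: "?P (idx t)" unfolding idx_def using PN by (rule LeastI)
  have le: "idx t \<le> N" unfolding idx_def using PN by (rule Least_le)
  have low: "c (idx t - 1) \<le> t"
  proof (cases "idx t = 1")
    case True thus ?thesis using c0 assms by simp
  next
    case False
    hence "idx t - 1 < idx t" "1 \<le> idx t - 1" using P by auto
    hence "\<not> ?P (idx t - 1)" unfolding idx_def by (intro not_less_Least) simp
    thus ?thesis using \<open>1 \<le> idx t - 1\<close> by simp
  qed
  show ?thesis using P le low by auto
qed

lemma idx_eq:
  assumes i: "i \<in> {1..N}" and t: "t \<le> c i" and o: "i = 1 \<or> c (i - 1) < t"
  shows "idx t = i"
  unfolding idx_def
proof (rule Least_equality)
  show "1 \<le> i \<and> t \<le> c i" using i t by auto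
  fix j assume j: "1 \<le> j \<and> t \<le> c j"
  show "i \<le> j"
  proof (rule ccontr)
    assume "\<not> i \<le> j"
    hence "j \<le> i - 1" "i \<noteq> 1" using j by auto
    hence "c j \<le> c (i - 1)" using i by (intro c_mono) auto
    thus False using j o \<open>i \<noteq> 1\<close> by auto
  qed
qed

lemma find_int: "t \<in> {0..1} \<Longrightarrow> \<exists>i\<in>{1..N}. c (i-1) \<le> t \<and> t \<le> c i"
  using idx_props by blast

end

context qarc begin

lemma fix_in: assumes i: "i \<in> {1..N}" and fx: "S i x = x" shows "x \<in> \<gamma>"
proof -
  obtain y where y: "y \<in> \<gamma>" and ymin: "\<And>z. z \<in> \<gamma> \<Longrightarrow> dist x y \<le> dist x z"
    using distance_attains_inf[OF gclosed gne] by blast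
  have "S i y \<in> \<gamma>" using Ssub[OF i] y by blast
  hence "dist x y \<le> dist x (S i y)" by (rule ymin)
  also have "\<dots> = r i * dist x y" using Sdist[OF i, of x y] fx by simp
  finally have "(1 - r i) * dist x y \<le> 0" by (simp add: algebra_simps)
  moreover have "1 - r i > 0" using rlt1[OF i] by simp
  ultimately have "dist x y \<le> 0" by (simp add: mult_le_0_iff)
  hence "x = y" by simp
  thus ?thesis using y by simp
qed

lemma a_in: "a \<in> \<gamma>" using fix_in[of 1 a] fa N2 by auto
lemma b_in: "b \<in> \<gamma>" using fix_in[of N b] fb N2 by auto

definition D where "D = diameter \<gamma>"

lemma D_bound: "x \<in> \<gamma> \<Longrightarrow> y \<in> \<gamma> \<Longrightarrow> dist x y \<le> D"
  unfolding D_def using gcomp compact_imp_bounded diameter_bounded_bound by blast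

lemma D_nonneg: "0 \<le> D"
  unfolding D_def using gcomp compact_imp_bounded diameter_ge_0 by blast

definition Tm :: "(real \<Rightarrow> 'a) \<Rightarrow> real \<Rightarrow> 'a" where
  "Tm g t = S (idx t) (g ((t - c (idx t - 1)) / p (idx t)))"
definition phi0 :: "real \<Rightarrow> 'a" where "phi0 t = (if t < 1 then a else b)"
definition phis :: "nat \<Rightarrow> real \<Rightarrow> 'a" where "phis k = (Tm ^^ k) phi0"

lemma phis_Suc: "phis (Suc k) t = Tm (phis k) t" unfolding phis_def by simp

lemma resc:
  assumes t: "t \<in> {0..1}"
  shows "(t - c (idx t - 1)) / p (idx t) \<in> {0..1}"
proof -
  have ip: "idx t \<in> {1..N}" "c (idx t - 1) \<le> t" "t \<le> c (idx t)" using idx_props[OF t] by auto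
  have pp: "0 < p (idx t)" using p_pos[OF ip(1)] .
  have "c (idx t) = c (idx t - 1) + p (idx t)" using c_diff[OF ip(1)] .
  thus ?thesis using ip pp by (auto simp: field_simps)
qed

lemma idx0: "idx 0 = 1"
  using N2 c_nonneg[of 1] by (intro idx_eq) auto

lemma idx1: "idx 1 = N"
  using N2 cN c_strict[of "N-1" N] by (intro idx_eq) auto

lemma Tm0: "Tm g 0 = S 1 (g 0)"
  unfolding Tm_def idx0 using c0 by simp

lemma Tm1: "Tm g 1 = S N (g 1)"
proof -
  have "c N = c (N - 1) + p N" using N2 by (intro c_diff) auto
  hence "(1 - c (N - 1)) / p N = 1" using cN p_pos[of N] N2 by auto
  thus ?thesis unfolding Tm_def idx1 by simp
qed

lemma phis0: "phis k 0 = a"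
  using fa by (induction k) (auto simp: phis_Suc Tm0 phis_def phi0_def)

lemma phis1: "phis k 1 = b"
  by (induction k) (auto simp: phis_Suc Tm1 fb phis_def phi0_def)

lemma phis_in: "t \<in> {0..1} \<Longrightarrow> phis k t \<in> \<gamma>"
proof (induction k arbitrary: t)
  case 0 thus ?case using a_in b_in by (simp add: phis_def phi0_def)
next
  case (Suc k)
  have "phis k ((t - c (idx t - 1)) / p (idx t)) \<in> \<gamma>" using Suc resc by blast
  thus ?case unfolding phis_Suc Tm_def using Ssub idx_props Suc.prems by blast
qed

lemma Tm_FE:
  assumes g0: "g 0 = a" and g1: "g 1 = b" and i: "i \<in> {1..N}" and x: "x \<in> {0..1}"
  shows "Tm g (c (i - 1) + p i * x) = S i (g x)"
proof -
  let ?t = "c (i - 1) + p i * x"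
  have pp: "0 < p i" using p_pos[OF i] .
  have ci: "c i = c (i - 1) + p i" using c_diff[OF i] .
  show ?thesis
  proof (cases "x = 0 \<and> i \<noteq> 1")
    case False
    have "?t \<le> c i" using ci x pp by (auto intro: mult_left_le)
    moreover have "i = 1 \<or> c (i - 1) < ?t" using False x pp by auto
    ultimately have "idx ?t = i" using i by (intro idx_eq) auto
    thus ?thesis unfolding Tm_def using pp by simp
  next
    case True
    hence x0: "x = 0" and i2: "i \<ge> 2" using i by auto
    have i1: "i - 1 \<in> {1..N}" using i2 i by auto
    have "idx ?t = i - 1"
    proof (rule idx_eq[OF i1])
      show "?t \<le> c (i - 1)" using x0 by simp
      show "i - 1 = 1 \<or> c (i - 1 - 1) < ?t" using x0 c_strict[of "i-1-1" "i-1"] i2 i by auto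
    qed
    moreover have "c (i - 1) = c (i - 1 - 1) + p (i - 1)" using c_diff[OF i1] .
    moreover have "0 < p (i - 1)" using p_pos[OF i1] .
    ultimately have "Tm g ?t = S (i - 1) b" unfolding Tm_def using x0 g1 by simp
    also have "\<dots> = S (i - 1 + 1) a" using i1 i by (intro junc) auto
    also have "\<dots> = S i (g x)" using x0 g0 i2 by simp
    finally show ?thesis .
  qed
qed

definition rmax where "rmax = Max (r ` {1..N})"

lemma rmax_props: "0 \<le> rmax" "rmax < 1" "\<And>i. i \<in> {1..N} \<Longrightarrow> r i \<le> rmax"
proof -
  have ne: "{1..N} \<noteq> {}" using N2 by auto
  have "rmax \<in> r ` {1..N}" unfolding rmax_def using ne by (intro Max_in) auto
  thus "0 \<le> rmax" "rmax < 1" using rpos rlt1 by (auto intro: less_imp_le)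
  show "\<And>i. i \<in> {1..N} \<Longrightarrow> r i \<le> rmax" unfolding rmax_def by (intro Max_ge) auto
qed

lemma phis_step: "t \<in> {0..1} \<Longrightarrow> dist (phis (Suc k) t) (phis k t) \<le> rmax ^ k * D"
proof (induction k arbitrary: t)
  case 0 thus ?case using D_bound phis_in by simp
next
  case (Suc k)
  let ?i = "idx t" and ?t' = "(t - c (idx t - 1)) / p (idx t)"
  have i: "?i \<in> {1..N}" using idx_props Suc.prems by blast
  have "dist (phis (Suc (Suc k)) t) (phis (Suc k) t) = r ?i * dist (phis (Suc k) ?t') (phis k ?t')"
    unfolding phis_Suc[of "Suc k"] phis_Suc[of k] Tm_def using Sdist[OF i] by simp
  also have "\<dots> \<le> rmax * (rmax ^ k * D)"
    by (rule mult_mono[OF rmax_props(3)[OF i] Suc.IH[OF resc[OF Suc.prems]] rmax_props(1) zero_le_dist])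
  finally show ?case by simp
qed

definition phi :: "real \<Rightarrow> 'a" where
  "phi t = phi0 t + (\<Sum>k. phis (Suc k) t - phis k t)"

lemma phis_lim: assumes t: "t \<in> {0..1}" shows "(\<lambda>k. phis k t) \<longlonglongrightarrow> phi t"
proof -
  have sg: "summable (\<lambda>k. rmax ^ k * D)"
    by (rule summable_mult2[OF summable_geometric]) (use rmax_props(1,2) in simp)
  have bd: "norm (phis (Suc n) t - phis n t) \<le> rmax ^ n * D" for n
    using phis_step[OF t, of n] by (simp add: dist_norm)
  have sm: "summable (\<lambda>k. phis (Suc k) t - phis k t)"
    by (rule summable_comparison_test'[OF sg bd])
  have eq: "phis k t = phi0 t + (\<Sum>j<k. phis (Suc j) t - phis j t)" for k
  proof -
    have "(\<Sum>j<k. phis (Suc j) t - phis j t) = phis k t - phis 0 t" by (rule sum_lessThan_telescope)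
    moreover have "phis 0 t = phi0 t" by (simp add: phis_def)
    ultimately show ?thesis by simp
  qed
  have "(\<lambda>k. phi0 t + (\<Sum>j<k. phis (Suc j) t - phis j t)) \<longlonglongrightarrow> phi t"
    unfolding phi_def by (rule tendsto_add[OF tendsto_const summable_LIMSEQ[OF sm]])
  thus ?thesis unfolding eq[symmetric] .
qed

lemma phi_in: "t \<in> {0..1} \<Longrightarrow> phi t \<in> \<gamma>"
  using closed_sequentially[OF gclosed _ phis_lim] phis_in by blast

lemma phi0a: "phi 0 = a"
proof -
  have "(\<lambda>k. a) \<longlonglongrightarrow> phi 0" using phis_lim[of 0] phis0 by simp
  thus ?thesis by (simp add: LIMSEQ_const_iff)
qed

lemma phi1b: "phi 1 = b"
proof -
  have "(\<lambda>k. b) \<longlonglongrightarrow> phi 1" using phis_lim[of 1] phis1 by simp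
  thus ?thesis by (simp add: LIMSEQ_const_iff)
qed

lemma phi_FE:
  assumes i: "i \<in> {1..N}" and x: "x \<in> {0..1}"
  shows "phi (c (i - 1) + p i * x) = S i (phi x)"
proof -
  let ?t = "c (i - 1) + p i * x"
  have t: "?t \<in> {0..1}"
  proof -
    have "c i = c (i - 1) + p i" using c_diff[OF i] .
    moreover have "0 \<le> c (i - 1)" "c i \<le> 1" using i c_nonneg c_le1 by auto
    moreover have "p i * x \<le> p i" using x p_pos[OF i] by (auto intro: mult_left_le)
    moreover have "0 \<le> p i * x" using x p_pos[OF i] by auto
    ultimately show ?thesis unfolding atLeastAtMost_iff by linarith
  qed
  have "(\<lambda>k. phis (Suc k) ?t) \<longlonglongrightarrow> phi ?t" using phis_lim[OF t] by (rule LIMSEQ_Suc)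
  moreover have "phis (Suc k) ?t = S i (phis k x)" for k
    unfolding phis_Suc by (rule Tm_FE[OF phis0 phis1 i x])
  moreover have "(\<lambda>k. S i (phis k x)) \<longlonglongrightarrow> S i (phi x)"
    by (rule isCont_tendsto_compose[OF _ phis_lim[OF x]])
       (use Scont[OF i, of UNIV] in \<open>simp add: continuous_on_eq_continuous_at\<close>)
  ultimately show ?thesis using LIMSEQ_unique by auto
qed

end

context qarc begin

definition pmin where "pmin = Min (p ` {1..N})"
definition pmax where "pmax = Max (p ` {1..N})"

lemma pm_props: "0 < pmin" "pmax < 1" "0 < pmax" "\<And>i. i \<in> {1..N} \<Longrightarrow> pmin \<le> p i"
  "\<And>i. i \<in> {1..N} \<Longrightarrow> p i \<le> pmax"
proof -
  have ne: "{1..N} \<noteq> {}" using N2 by auto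
  have "pmin \<in> p ` {1..N}" unfolding pmin_def using ne by (intro Min_in) auto
  thus "0 < pmin" using p_pos by auto
  have "pmax \<in> p ` {1..N}" unfolding pmax_def using ne by (intro Max_in) auto
  thus "pmax < 1" "0 < pmax" using p_pos p_lt1 by auto
  show "\<And>i. i \<in> {1..N} \<Longrightarrow> pmin \<le> p i" unfolding pmin_def by (intro Min_le) auto
  show "\<And>i. i \<in> {1..N} \<Longrightarrow> p i \<le> pmax" unfolding pmax_def by (intro Max_ge) auto
qed

lemma decomp:
  assumes i: "i \<in> {1..N}" and "c (i - 1) \<le> t" "t \<le> c i"
  shows "\<exists>x\<in>{0..1}. t = c (i - 1) + p i * x"
proof -
  have pp: "0 < p i" using p_pos[OF i] .
  have ci: "c i = c (i - 1) + p i" using c_diff[OF i] .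
  show ?thesis
    by (rule bexI[of _ "(t - c (i - 1)) / p i"]) (use assms pp ci in \<open>auto simp: field_simps\<close>)
qed

lemma powr_scale: "i \<in> {1..N} \<Longrightarrow> 0 \<le> z \<Longrightarrow> (p i * z) powr (1/s) = r i * z powr (1/s)"
  using p_root by (simp add: powr_mult)

lemma phi_sd:
  assumes i: "i \<in> {1..N}" and x: "x \<in> {0..1}" and y: "y \<in> {0..1}"
  shows "dist (phi (c (i - 1) + p i * x)) (phi (c (i - 1) + p i * y)) = r i * dist (phi x) (phi y)"
  using phi_FE[OF i x] phi_FE[OF i y] Sdist[OF i] by simp

lemma phi_D: "x \<in> {0..1} \<Longrightarrow> y \<in> {0..1} \<Longrightarrow> dist (phi x) (phi y) \<le> D"
  using phi_in D_bound by blast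

definition E where "E = D / pmin powr (1/s)"

lemma E_nonneg: "0 \<le> E" unfolding E_def using D_nonneg pm_props by simp

lemma far_up: assumes "pmin \<le> z" "x \<in> {0..1}" "y \<in> {0..1}"
  shows "dist (phi x) (phi y) \<le> E * z powr (1/s)"
proof -
  have "pmin powr (1/s) \<le> z powr (1/s)" using assms pm_props spos by (intro powr_mono2) auto
  moreover have "0 < pmin powr (1/s)" using pm_props by simp
  ultimately have "D \<le> E * z powr (1/s)" unfolding E_def using D_nonneg
    by (simp add: field_simps mult_left_mono)
  thus ?thesis using phi_D assms order_trans by blast
qed

lemma exists_k: "0 < z \<Longrightarrow> \<exists>k. pmax ^ k \<le> z"
  using real_arch_pow_inv[of z pmax] pm_props less_imp_le by blast

lemma upR: assumes x: "x \<in> {0..1}" shows "dist (phi x) b \<le> E * (1 - x) powr (1/s)"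
proof -
  have N1: "N \<in> {1..N}" using N2 by auto
  have cN1: "c (N - 1) + p N = 1" using c_diff[OF N1] cN by simp
  have far: "dist (phi x) b \<le> E * (1 - x) powr (1/s)" if "x \<in> {0..1}" "x \<le> c (N - 1)" for x
    using far_up[of "1 - x" x 1] that pm_props(4)[OF N1] cN1 phi1b by auto
  have main: "\<forall>x\<in>{0..1}. pmax ^ k \<le> 1 - x \<longrightarrow> dist (phi x) b \<le> E * (1 - x) powr (1/s)" for k
  proof (induction k)
    case 0 show ?case using far[of 0] c_nonneg[of "N - 1"] by auto
  next
    case (Suc k)
    show ?case
    proof (intro ballI impI)
      fix x assume x: "x \<in> {0..1}" and k: "pmax ^ Suc k \<le> 1 - x"
      show "dist (phi x) b \<le> E * (1 - x) powr (1/s)"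
      proof (cases "x \<le> c (N - 1)")
        case True thus ?thesis using far x by blast
      next
        case False
        then obtain y where y: "y \<in> {0..1}" and xy: "x = c (N - 1) + p N * y"
          using decomp[OF N1, of x] x cN by auto
        have 1: "1 - x = p N * (1 - y)" using xy cN1 by (simp add: algebra_simps)
        have "pmax * pmax ^ k \<le> pmax * (1 - y)"
          using k 1 pm_props(5)[OF N1] y by (simp add: mult_right_mono order_trans)
        hence "pmax ^ k \<le> 1 - y" using pm_props(3) by simp
        hence IH: "dist (phi y) b \<le> E * (1 - y) powr (1/s)" using Suc.IH y by blast
        have "dist (phi x) b = r N * dist (phi y) (phi 1)"
          using phi_sd[OF N1 y, of 1] xy cN1 phi1b by simp
        also have "\<dots> \<le> r N * (E * (1 - y) powr (1/s))"
          using IH rpos[OF N1] phi1b by (simp add: mult_left_mono)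
        also have "\<dots> = E * (1 - x) powr (1/s)"
          using powr_scale[OF N1, of "1 - y"] 1 y by simp
        finally show ?thesis .
      qed
    qed
  qed
  show ?thesis
  proof (cases "x = 1")
    case True thus ?thesis using phi1b by simp
  next
    case False
    then obtain k where "pmax ^ k \<le> 1 - x" using exists_k[of "1 - x"] x by auto
    thus ?thesis using main x by blast
  qed
qed

lemma upL: assumes x: "x \<in> {0..1}" shows "dist (phi x) a \<le> E * x powr (1/s)"
proof -
  have N1: "1 \<in> {1..N}" using N2 by auto
  have c1: "c 1 = p 1" using c_diff[OF N1] c0 by simp
  have far: "dist (phi x) a \<le> E * x powr (1/s)" if "x \<in> {0..1}" "c 1 \<le> x" for x
    using far_up[of x x 0] that pm_props(4)[OF N1] c1 phi0a by auto
  have main: "\<forall>x\<in>{0..1}. pmax ^ k \<le> x \<longrightarrow> dist (phi x) a \<le> E * x powr (1/s)" for k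
  proof (induction k)
    case 0 show ?case using far[of 1] c_le1[of 1] N2 by auto
  next
    case (Suc k)
    show ?case
    proof (intro ballI impI)
      fix x assume x: "x \<in> {0..1}" and k: "pmax ^ Suc k \<le> x"
      show "dist (phi x) a \<le> E * x powr (1/s)"
      proof (cases "c 1 \<le> x")
        case True thus ?thesis using far x by blast
      next
        case False
        then obtain y where y: "y \<in> {0..1}" and xy: "x = c (1 - 1) + p 1 * y"
          using decomp[OF N1, of x] x c0 by auto
        have 1: "x = p 1 * y" using xy c0 by simp
        have "pmax * pmax ^ k \<le> pmax * y"
          using k 1 pm_props(5)[OF N1] y by (simp add: mult_right_mono order_trans)
        hence "pmax ^ k \<le> y" using pm_props(3) by simp
        hence IH: "dist (phi y) a \<le> E * y powr (1/s)" using Suc.IH y by blast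
        have "dist (phi x) a = r 1 * dist (phi y) (phi 0)"
          using phi_sd[OF N1 y, of 0] xy c0 phi0a by simp
        also have "\<dots> \<le> r 1 * (E * y powr (1/s))"
          using IH rpos[OF N1] phi0a by (simp add: mult_left_mono)
        also have "\<dots> = E * x powr (1/s)"
          using powr_scale[OF N1, of y] 1 y by simp
        finally show ?thesis .
      qed
    qed
  qed
  show ?thesis
  proof (cases "x = 0")
    case True thus ?thesis using phi0a by simp
  next
    case False
    then obtain k where "pmax ^ k \<le> x" using exists_k[of x] x by auto
    thus ?thesis using main x by blast
  qed
qed


lemma cases_int:
  assumes t: "t \<in> {0..1}" and u: "u \<in> {0..1}" and tu: "t < u"
  obtains (same) i where "i \<in> {1..N}" "c (i - 1) \<le> t" "u \<le> c i"
  | (adj) i where "i \<in> {1..<N}" "c (i - 1) \<le> t" "t \<le> c i" "c i \<le> u" "u \<le> c (i + 1)"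
  | (far) i j where "i \<in> {1..N}" "j \<in> {1..N}" "i + 2 \<le> j" "c (i - 1) \<le> t" "t \<le> c i"
      "c (j - 1) \<le> u" "u \<le> c j"
proof -
  obtain i where i: "i \<in> {1..N}" "c (i - 1) \<le> t" "t \<le> c i" using find_int[OF t] by blast
  obtain j where j: "j \<in> {1..N}" "c (j - 1) \<le> u" "u \<le> c j" using find_int[OF u] by blast
  consider "j < i" | "j = i" | "j = i + 1" | "i + 2 \<le> j" by linarith
  thus thesis
  proof cases
    case 1
    hence "c j \<le> c (i - 1)" using i by (intro c_mono) auto
    thus ?thesis using i j tu by auto
  next
    case 2 thus ?thesis using i j same by auto
  next
    case 3 thus ?thesis using i j adj[of i] by auto
  next
    case 4 thus ?thesis using i j far by blast
  qed
qed

lemma far_gap: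
  assumes "i \<in> {1..N}" "j \<in> {1..N}" "i + 2 \<le> j" "t \<le> c i" "c (j - 1) \<le> u"
  shows "pmin \<le> u - t"
proof -
  have i1: "i + 1 \<in> {1..N}" using assms by auto
  have "c (i + 1) \<le> c (j - 1)" using assms by (intro c_mono) auto
  moreover have "c (i + 1) = c i + p (i + 1)" using c_Suc[of i] by simp
  moreover have "pmin \<le> p (i + 1)" using pm_props(4)[OF i1] .
  ultimately show ?thesis using assms by linarith
qed

lemma adj_pt:
  assumes i: "i \<in> {1..<N}"
  shows "phi (c i) = S i b" "phi (c i) = S (i + 1) a"
proof -
  have i1: "i \<in> {1..N}" "i + 1 \<in> {1..N}" using i by auto
  have "c i = c (i - 1) + p i * 1" using c_diff[OF i1(1)] by simp
  thus "phi (c i) = S i b" using phi_FE[OF i1(1), of 1] phi1b by simp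
  have "c i = c (i + 1 - 1) + p (i + 1) * 0" by simp
  thus "phi (c i) = S (i + 1) a" using phi_FE[OF i1(2), of 0] phi0a by (metis atLeastAtMost_iff order_refl zero_le_one)
qed

lemma adj_left:
  assumes i: "i \<in> {1..N}" and t: "c (i - 1) \<le> t" "t \<le> c i"
  shows "dist (phi t) (phi (c i)) = r i * dist (phi ((t - c (i - 1)) / p i)) b"
    and "(t - c (i - 1)) / p i \<in> {0..1}"
    and "c i - t = p i * (1 - (t - c (i - 1)) / p i)"
proof -
  have pp: "0 < p i" using p_pos[OF i] .
  have ci: "c i = c (i - 1) + p i" using c_diff[OF i] .
  let ?x = "(t - c (i - 1)) / p i"
  show x: "?x \<in> {0..1}" using t pp ci by (auto simp: field_simps)
  have tx: "t = c (i - 1) + p i * ?x" using pp by simp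
  have "c i = c (i - 1) + p i * 1" using ci by simp
  hence "dist (phi t) (phi (c i)) = r i * dist (phi ?x) (phi 1)"
    using phi_sd[OF i x, of 1] tx by (metis atLeastAtMost_iff order_refl zero_le_one)
  thus "dist (phi t) (phi (c i)) = r i * dist (phi ?x) b" using phi1b by simp
  show "c i - t = p i * (1 - ?x)" using pp ci by (simp add: field_simps)
qed

lemma adj_right:
  assumes i: "i \<in> {1..N}" and t: "c (i - 1) \<le> t" "t \<le> c i"
  shows "dist (phi t) (phi (c (i - 1))) = r i * dist (phi ((t - c (i - 1)) / p i)) a"
    and "t - c (i - 1) = p i * ((t - c (i - 1)) / p i)"
proof -
  have pp: "0 < p i" using p_pos[OF i] .
  have ci: "c i = c (i - 1) + p i" using c_diff[OF i] .
  let ?x = "(t - c (i - 1)) / p i"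
  have x: "?x \<in> {0..1}" using t pp ci by (auto simp: field_simps)
  have tx: "t = c (i - 1) + p i * ?x" using pp by simp
  have "c (i - 1) = c (i - 1) + p i * 0" by simp
  hence "dist (phi t) (phi (c (i - 1))) = r i * dist (phi ?x) (phi 0)"
    using phi_sd[OF i x, of 0] tx by (metis atLeastAtMost_iff order_refl zero_le_one)
  thus "dist (phi t) (phi (c (i - 1))) = r i * dist (phi ?x) a" using phi0a by simp
  show "t - c (i - 1) = p i * ?x" using pp by simp
qed

lemma up2_lt:
  assumes t: "t \<in> {0..1}" and u: "u \<in> {0..1}" and tu: "t < u"
  shows "dist (phi t) (phi u) \<le> 2 * E * (u - t) powr (1/s)"
proof -
  have big: "dist (phi t) (phi u) \<le> 2 * E * (u - t) powr (1/s)"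
    if "t \<in> {0..1}" "u \<in> {0..1}" "pmin \<le> u - t" for t u
  proof -
    have "dist (phi t) (phi u) \<le> E * (u - t) powr (1/s)" using far_up that by blast
    also have "\<dots> \<le> 2 * E * (u - t) powr (1/s)" using E_nonneg by simp
    finally show ?thesis .
  qed
  have p1: "pmin \<le> 1" using pm_props(4)[of 1] p_lt1[of 1] N2 by auto
  have main: "\<forall>t\<in>{0..1}. \<forall>u\<in>{0..1}. t < u \<longrightarrow> pmax ^ k \<le> u - t \<longrightarrow>
      dist (phi t) (phi u) \<le> 2 * E * (u - t) powr (1/s)" for k
  proof (induction k)
    case 0 show ?case using big p1 by auto
  next
    case (Suc k)
    show ?case
    proof (intro ballI impI)
      fix t u assume t: "t \<in> {0..1}" and u: "u \<in> {0..1}" and tu: "t < u" and k: "pmax ^ Suc k \<le> u - t"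
      show "dist (phi t) (phi u) \<le> 2 * E * (u - t) powr (1/s)"
      proof (cases "pmin \<le> u - t")
        case True thus ?thesis using big t u by blast
      next
        case small: False
        from t u tu show ?thesis
        proof (cases rule: cases_int)
          case (same i)
          have pp: "0 < p i" using p_pos[OF same(1)] .
          have ci: "c i = c (i - 1) + p i" using c_diff[OF same(1)] .
          let ?x = "(t - c (i - 1)) / p i" and ?y = "(u - c (i - 1)) / p i"
          have x: "?x \<in> {0..1}" and y: "?y \<in> {0..1}" using same tu pp ci by (auto simp: field_simps)
          have xy: "?x < ?y" using tu pp by (simp add: divide_strict_right_mono)
          have uy: "u - t = p i * (?y - ?x)" using pp by (simp add: field_simps)
          have "pmax * pmax ^ k \<le> pmax * (?y - ?x)"
            using k uy pm_props(5)[OF same(1)] xy by (simp add: mult_right_mono order_trans)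
          hence "pmax ^ k \<le> ?y - ?x" using pm_props(3) by simp
          hence IH: "dist (phi ?x) (phi ?y) \<le> 2 * E * (?y - ?x) powr (1/s)" using Suc.IH x y xy by blast
          have "dist (phi t) (phi u) = r i * dist (phi ?x) (phi ?y)"
            using phi_sd[OF same(1) x y] pp by simp
          also have "\<dots> \<le> r i * (2 * E * (?y - ?x) powr (1/s))"
            using IH rpos[OF same(1)] by (simp add: mult_left_mono)
          also have "\<dots> = 2 * E * (u - t) powr (1/s)"
            using powr_scale[OF same(1), of "?y - ?x"] uy xy by simp
          finally show ?thesis .
        next
          case (adj i)
          have i1: "i \<in> {1..N}" "i + 1 \<in> {1..N}" using adj(1) by auto
          have cu: "c (i + 1 - 1) \<le> u" using adj tu by simp
          have cu2: "u \<le> c (i + 1)" using adj by simp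
          note L = adj_left[OF i1(1) adj(2,3)]
          note R = adj_right[OF i1(2) cu cu2]
          let ?x = "(t - c (i - 1)) / p i" and ?y = "(u - c (i + 1 - 1)) / p (i + 1)"
          have y01: "?y \<in> {0..1}"
          proof -
            have "c (i + 1) = c (i + 1 - 1) + p (i + 1)" using c_diff[OF i1(2)] .
            thus ?thesis using cu cu2 p_pos[OF i1(2)] by (auto simp: field_simps)
          qed
          have d1: "dist (phi t) (phi (c i)) \<le> E * (c i - t) powr (1/s)"
          proof -
            have "dist (phi t) (phi (c i)) \<le> r i * (E * (1 - ?x) powr (1/s))"
              using L(1) upR[OF L(2)] rpos[OF i1(1)] by (simp add: mult_left_mono)
            also have "\<dots> = E * (c i - t) powr (1/s)"
              using powr_scale[OF i1(1), of "1 - ?x"] L(2,3) by simp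
            finally show ?thesis .
          qed
          have d2: "dist (phi u) (phi (c i)) \<le> E * (u - c i) powr (1/s)"
          proof -
            have "dist (phi u) (phi (c i)) \<le> r (i + 1) * (E * ?y powr (1/s))"
              using R(1) upL[OF y01] rpos[OF i1(2)] by (simp add: mult_left_mono)
            also have "\<dots> = E * (u - c i) powr (1/s)"
              using powr_scale[OF i1(2), of ?y] R(2) y01 by simp
            finally show ?thesis .
          qed
          have e1: "(c i - t) powr (1/s) \<le> (u - t) powr (1/s)"
            using adj spos by (intro powr_mono2) auto
          have e2: "(u - c i) powr (1/s) \<le> (u - t) powr (1/s)"
            using adj cu spos by (intro powr_mono2) auto
          have "dist (phi t) (phi u) \<le> dist (phi t) (phi (c i)) + dist (phi u) (phi (c i))"
            by (metis dist_commute dist_triangle)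
          also have "\<dots> \<le> E * (u - t) powr (1/s) + E * (u - t) powr (1/s)"
            using d1 d2 e1 e2 E_nonneg by (smt (verit) mult_left_mono)
          finally show ?thesis by simp
        next
          case (far i j)
          hence "pmin \<le> u - t" using far_gap by blast
          thus ?thesis using small by simp
        qed
      qed
    qed
  qed
  obtain k where "pmax ^ k \<le> u - t" using exists_k[of "u - t"] tu by auto
  thus ?thesis using main t u tu by blast
qed

lemma up2:
  assumes t: "t \<in> {0..1}" and u: "u \<in> {0..1}"
  shows "dist (phi t) (phi u) \<le> 2 * E * \<bar>t - u\<bar> powr (1/s)"
proof -
  consider "t < u" | "t = u" | "u < t" by linarith
  thus ?thesis
  proof cases
    case 1 thus ?thesis using up2_lt[OF t u] by (simp add: abs_if)
  next
    case 2 thus ?thesis by simp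
  next
    case 3 thus ?thesis using up2_lt[OF u t] by (simp add: abs_if dist_commute)
  qed
qed

end

lemma same_side:
  fixes A B :: "real set"
  assumes A: "is_interval A" and B: "is_interval B" and aA: "\<alpha> \<in> A" and aB: "\<alpha> \<in> B"
    and AB: "A \<inter> B \<subseteq> {\<alpha>}" and x: "x \<in> A" and y: "y \<in> B" and xa: "x \<noteq> \<alpha>" and ya: "y \<noteq> \<alpha>"
  shows "x < \<alpha> \<longleftrightarrow> \<alpha> < y"
proof -
  have False if "\<alpha> < x" "\<alpha> < y"
  proof -
    have "min x y \<in> A" using mem_is_interval_1_I[OF A aA x] that by auto
    moreover have "min x y \<in> B" using mem_is_interval_1_I[OF B aB y] that by auto
    ultimately show False using AB that by (auto simp: min_def split: if_splits)
  qed
  moreover have False if "x < \<alpha>" "y < \<alpha>"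
  proof -
    have "max x y \<in> A" using mem_is_interval_1_I[OF A x aA] that by auto
    moreover have "max x y \<in> B" using mem_is_interval_1_I[OF B y aB] that by auto
    ultimately show False using AB that by (auto simp: max_def split: if_splits)
  qed
  ultimately show ?thesis using xa ya by force
qed

context qarc begin

lemma phi_cont: "continuous_on {0..1} phi"
  unfolding continuous_on_iff
proof (intro ballI allI impI)
  fix x e :: real assume x: "x \<in> {0..1}" and e: "0 < e"
  define B where "B = 2 * E + 1"
  have B: "0 < B" unfolding B_def using E_nonneg by simp
  show "\<exists>d>0. \<forall>x'\<in>{0..1}. dist x' x < d \<longrightarrow> dist (phi x') (phi x) < e"
  proof (intro exI[of _ "(e / B) powr s"] conjI ballI impI)
    show "0 < (e / B) powr s" using e B by simp
    fix x' assume x': "x' \<in> {0..1}" and d: "dist x' x < (e / B) powr s"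
    have "\<bar>x' - x\<bar> powr (1/s) < ((e / B) powr s) powr (1/s)"
      using d spos by (intro powr_less_mono2) (auto simp: dist_real_def)
    also have "\<dots> = e / B" using spos e B by (simp add: powr_powr)
    finally have lt: "\<bar>x' - x\<bar> powr (1/s) < e / B" .
    have "dist (phi x') (phi x) \<le> 2 * E * \<bar>x' - x\<bar> powr (1/s)" by (rule up2[OF x' x])
    also have "\<dots> \<le> B * \<bar>x' - x\<bar> powr (1/s)" unfolding B_def by (simp add: mult_right_mono)
    also have "\<dots> < B * (e / B)" using lt B by (intro mult_strict_left_mono)
    also have "\<dots> = e" using B by simp
    finally show "dist (phi x') (phi x) < e" .
  qed
qed

lemma phi_img: "phi ` {0..1} = \<gamma>"
proof
  show "phi ` {0..1} \<subseteq> \<gamma>" using phi_in by blast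
  define \<Phi> where "\<Phi> = phi ` {0..1}"
  have Pc: "compact \<Phi>" unfolding \<Phi>_def by (intro compact_continuous_image phi_cont) auto
  hence Pcl: "closed \<Phi>" by (rule compact_imp_closed)
  have Pne: "\<Phi> \<noteq> {}" unfolding \<Phi>_def by auto
  have Pinv: "S i z \<in> \<Phi>" if i: "i \<in> {1..N}" and z: "z \<in> \<Phi>" for i z
  proof -
    obtain w where w: "w \<in> {0..1}" "z = phi w" using z unfolding \<Phi>_def by auto
    have "S i z = phi (c (i - 1) + p i * w)" using phi_FE[OF i w(1)] w by simp
    moreover have "c (i - 1) + p i * w \<in> {0..1}"
    proof -
      have "c i = c (i - 1) + p i" using c_diff[OF i] .
      moreover have "0 \<le> c (i - 1)" "c i \<le> 1" using i c_nonneg c_le1 by auto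
      moreover have "p i * w \<le> p i" using w p_pos[OF i] by (auto intro: mult_left_le)
      moreover have "0 \<le> p i * w" using w p_pos[OF i] by auto
      ultimately show ?thesis unfolding atLeastAtMost_iff by linarith
    qed
    ultimately show ?thesis unfolding \<Phi>_def by blast
  qed
  obtain xs where xs: "xs \<in> \<gamma>" and xmax: "\<And>y. y \<in> \<gamma> \<Longrightarrow> infdist y \<Phi> \<le> infdist xs \<Phi>"
    using continuous_attains_sup[OF gcomp gne continuous_on_infdist[OF continuous_on_id, of \<gamma> \<Phi>]] by auto
  obtain i y where i: "i \<in> {1..N}" and y: "y \<in> \<gamma>" and xy: "xs = S i y" using xs ginv by blast
  obtain z where z: "z \<in> \<Phi>" and zd: "infdist y \<Phi> = dist y z" using infdist_attains_inf[OF Pcl Pne] by blast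
  have "infdist xs \<Phi> \<le> dist xs (S i z)" using Pinv[OF i z] by (rule infdist_le)
  also have "\<dots> = r i * infdist y \<Phi>" using Sdist[OF i] xy zd by simp
  also have "\<dots> \<le> r i * infdist xs \<Phi>" using xmax[OF y] rpos[OF i] by (simp add: mult_left_mono)
  finally have "(1 - r i) * infdist xs \<Phi> \<le> 0" by (simp add: algebra_simps)
  moreover have "0 < 1 - r i" using rlt1[OF i] by simp
  ultimately have M0: "infdist xs \<Phi> \<le> 0" by (simp add: mult_le_0_iff)
  show "\<gamma> \<subseteq> phi ` {0..1}"
  proof
    fix x assume x: "x \<in> \<gamma>"
    have "infdist x \<Phi> = 0" using xmax[OF x] M0 infdist_nonneg[of x \<Phi>] by linarith
    thus "x \<in> phi ` {0..1}" using in_closed_iff_infdist_zero[OF Pcl Pne] unfolding \<Phi>_def by blast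
  qed
qed

lemma g_conn: "connected \<gamma>"
  using phi_img connected_continuous_image[OF phi_cont] by force

lemma piece_conn: "i \<in> {1..N} \<Longrightarrow> X \<subseteq> \<gamma> \<Longrightarrow> connected X \<Longrightarrow> connected (S i ` X)"
  using connected_continuous_image Scont by blast


definition hh :: "'a \<Rightarrow> real" where
  "hh = (SOME h. \<exists>g. homeomorphism \<gamma> {0..1} h g \<and> quasisymmetric_on \<gamma> h)"

lemma hh_props: "\<exists>g. homeomorphism \<gamma> {0..1} hh g \<and> quasisymmetric_on \<gamma> hh"
  unfolding hh_def using qse unfolding quasisymmetrically_equivalent_def by (rule someI_ex)

lemma hh_cont: "continuous_on \<gamma> hh" and hh_inj: "inj_on hh \<gamma>" and hh_img: "hh ` \<gamma> = {0..1}"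
  and hh_qs: "quasisymmetric_on \<gamma> hh"
proof -
  obtain g where hg: "homeomorphism \<gamma> {0..1} hh g" and q: "quasisymmetric_on \<gamma> hh" using hh_props by blast
  show "continuous_on \<gamma> hh" "hh ` \<gamma> = {0..1}" using hg unfolding homeomorphism_def by auto
  show "inj_on hh \<gamma>" using hg unfolding homeomorphism_def by (metis inj_on_inverseI)
  show "quasisymmetric_on \<gamma> hh" by (rule q)
qed

lemma hh_interval: "X \<subseteq> \<gamma> \<Longrightarrow> connected X \<Longrightarrow> is_interval (hh ` X)"
  using connected_continuous_image[OF continuous_on_subset[OF hh_cont]] is_interval_connected_1 by blast

lemma S_conn: "i \<in> {1..N} \<Longrightarrow> connected (S i ` \<gamma>)"
  using piece_conn[of i \<gamma>] g_conn by blast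

lemma SS_conn: "i \<in> {1..N} \<Longrightarrow> j \<in> {1..N} \<Longrightarrow> connected (S i ` S j ` \<gamma>)"
  using piece_conn[of i "S j ` \<gamma>"] S_conn Ssub by blast

lemma bt_const: "\<exists>t0>0. \<forall>x\<in>\<gamma>. \<forall>y\<in>\<gamma>. \<forall>z\<in>\<gamma>. \<bar>hh x - hh z\<bar> \<le> \<bar>hh x - hh y\<bar> \<longrightarrow> t0 * dist x z \<le> dist x y"
proof -
  obtain \<eta> :: "real \<Rightarrow> real" where hom: "homeomorphism {0..} {0..} \<eta> (inv_into {0..} \<eta>)"
    and sm: "strict_mono_on {0..} \<eta>"
    and Q: "\<And>x a b t. x \<in> \<gamma> \<Longrightarrow> a \<in> \<gamma> \<Longrightarrow> b \<in> \<gamma> \<Longrightarrow> t \<ge> 0 \<Longrightarrow> dist x a \<le> t * dist x b \<Longrightarrow>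
            dist (hh x) (hh a) \<le> \<eta> t * dist (hh x) (hh b)"
    using hh_qs unfolding quasisymmetric_on_def by blast
  have img: "\<eta> ` {0..} = {0..}" using hom unfolding homeomorphism_def by blast
  obtain t0 where t0: "t0 \<ge> 0" "\<eta> t0 = 1"
    using img by (metis atLeast_iff image_iff zero_le_one)
  obtain t1 where t1: "t1 \<ge> 0" "\<eta> t1 = 0"
    using img by (metis atLeast_iff image_iff order_refl)
  have t0pos: "t0 > 0"
  proof (rule ccontr)
    assume "\<not> t0 > 0"
    hence "t0 = 0" using t0 by simp
    hence "t1 \<noteq> 0" using t0 t1 by auto
    hence "t0 < t1" using t1 \<open>t0 = 0\<close> by simp
    hence "\<eta> t0 < \<eta> t1" using strict_mono_onD[OF sm, of t0 t1] t0 t1 by auto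
    thus False using t0 t1 by simp
  qed
  show ?thesis
  proof (intro exI[of _ t0] conjI t0pos ballI impI)
    fix x y z assume x: "x \<in> \<gamma>" and y: "y \<in> \<gamma>" and z: "z \<in> \<gamma>" and hz: "\<bar>hh x - hh z\<bar> \<le> \<bar>hh x - hh y\<bar>"
    show "t0 * dist x z \<le> dist x y"
    proof (cases "x = z")
      case True thus ?thesis by simp
    next
      case False
      hence dz: "0 < dist x z" by simp
      define T where "T = dist x y / dist x z"
      have T0: "T \<ge> 0" unfolding T_def by simp
      have "dist x y \<le> T * dist x z" unfolding T_def using dz by simp
      hence q: "dist (hh x) (hh y) \<le> \<eta> T * dist (hh x) (hh z)" using Q[OF x y z T0] by blast
      have "hh x \<noteq> hh z" using False hh_inj x z by (meson inj_on_def)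
      hence hpos: "0 < dist (hh x) (hh z)" by simp
      have "dist (hh x) (hh z) \<le> dist (hh x) (hh y)" using hz by (simp add: dist_real_def)
      hence "1 * dist (hh x) (hh z) \<le> \<eta> T * dist (hh x) (hh z)" using q by simp
      hence eT: "1 \<le> \<eta> T" using hpos by (simp only: mult_le_cancel_right)
      have "t0 \<le> T"
      proof (rule ccontr)
        assume "\<not> t0 \<le> T"
        hence "\<eta> T < \<eta> t0" using strict_mono_onD[OF sm, of T t0] T0 t0 by auto
        thus False using eT t0 by simp
      qed
      hence "t0 * dist x z \<le> T * dist x z" using dz by (simp add: mult_right_mono)
      also have "\<dots> = dist x y" unfolding T_def using dz by simp
      finally show ?thesis .
    qed
  qed
qed

lemma junction_between:
  assumes i: "i \<in> {1..<N}" and x: "x \<in> S i ` \<gamma>" and y: "y \<in> S (i + 1) ` \<gamma>"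
  shows "\<bar>hh x - hh (S (i + 1) a)\<bar> \<le> \<bar>hh x - hh y\<bar>"
proof -
  have i1: "i \<in> {1..N}" "i + 1 \<in> {1..N}" using i by auto
  let ?z = "S (i + 1) a"
  have zA: "?z \<in> S i ` \<gamma>" using junc[OF i] b_in by (metis imageI)
  have zB: "?z \<in> S (i + 1) ` \<gamma>" using a_in by blast
  have sA: "S i ` \<gamma> \<subseteq> \<gamma>" and sB: "S (i + 1) ` \<gamma> \<subseteq> \<gamma>" using Ssub i1 by auto
  have IA: "is_interval (hh ` S i ` \<gamma>)" using hh_interval[OF sA S_conn[OF i1(1)]] .
  have IB: "is_interval (hh ` S (i + 1) ` \<gamma>)" using hh_interval[OF sB S_conn[OF i1(2)]] .
  have AB: "hh ` S i ` \<gamma> \<inter> hh ` S (i + 1) ` \<gamma> \<subseteq> {hh ?z}"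
    using inj_on_image_Int[OF hh_inj sA sB] inter[OF i] by simp
  show ?thesis
  proof (cases "hh x = hh ?z \<or> hh y = hh ?z")
    case True thus ?thesis by auto
  next
    case False
    have "hh x < hh ?z \<longleftrightarrow> hh ?z < hh y"
      by (rule same_side[OF IA IB]) (use zA zB x y AB False in auto)
    thus ?thesis using False by auto
  qed
qed

lemma junction_between':
  assumes i: "i \<in> {1..<N}" and x: "x \<in> S i ` \<gamma>" and y: "y \<in> S (i + 1) ` \<gamma>"
  shows "\<bar>hh y - hh (S (i + 1) a)\<bar> \<le> \<bar>hh y - hh x\<bar>"
proof -
  have i1: "i \<in> {1..N}" "i + 1 \<in> {1..N}" using i by auto
  let ?z = "S (i + 1) a"
  have zA: "?z \<in> S i ` \<gamma>" using junc[OF i] b_in by (metis imageI)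
  have zB: "?z \<in> S (i + 1) ` \<gamma>" using a_in by blast
  have sA: "S i ` \<gamma> \<subseteq> \<gamma>" and sB: "S (i + 1) ` \<gamma> \<subseteq> \<gamma>" using Ssub i1 by auto
  have IA: "is_interval (hh ` S i ` \<gamma>)" using hh_interval[OF sA S_conn[OF i1(1)]] .
  have IB: "is_interval (hh ` S (i + 1) ` \<gamma>)" using hh_interval[OF sB S_conn[OF i1(2)]] .
  have AB: "hh ` S i ` \<gamma> \<inter> hh ` S (i + 1) ` \<gamma> \<subseteq> {hh ?z}"
    using inj_on_image_Int[OF hh_inj sA sB] inter[OF i] by simp
  show ?thesis
  proof (cases "hh x = hh ?z \<or> hh y = hh ?z")
    case True thus ?thesis by auto
  next
    case False
    have "hh x < hh ?z \<longleftrightarrow> hh ?z < hh y"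
      by (rule same_side[OF IA IB]) (use zA zB x y AB False in auto)
    thus ?thesis using False by auto
  qed
qed

lemma junction_const: "\<exists>t0>0. \<forall>i\<in>{1..<N}. \<forall>x\<in>S i ` \<gamma>. \<forall>y\<in>S (i + 1) ` \<gamma>.
    t0 * dist x (S (i + 1) a) \<le> dist x y \<and> t0 * dist y (S (i + 1) a) \<le> dist x y"
proof -
  obtain t0 where t0: "t0 > 0" and B: "\<forall>x\<in>\<gamma>. \<forall>y\<in>\<gamma>. \<forall>z\<in>\<gamma>. \<bar>hh x - hh z\<bar> \<le> \<bar>hh x - hh y\<bar> \<longrightarrow> t0 * dist x z \<le> dist x y"
    using bt_const by blast
  show ?thesis
  proof (intro exI[of _ t0] conjI t0 ballI)
    fix i x y assume i: "i \<in> {1..<N}" and x: "x \<in> S i ` \<gamma>" and y: "y \<in> S (i + 1) ` \<gamma>"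
    have i1: "i \<in> {1..N}" "i + 1 \<in> {1..N}" using i by auto
    have xg: "x \<in> \<gamma>" using x Ssub[OF i1(1)] by auto
    have yg: "y \<in> \<gamma>" using y Ssub[OF i1(2)] by auto
    have zg: "S (i + 1) a \<in> \<gamma>" using Ssub[OF i1(2)] a_in by auto
    show "t0 * dist x (S (i + 1) a) \<le> dist x y" using B xg yg zg junction_between[OF i x y] by blast
    have "t0 * dist y (S (i + 1) a) \<le> dist y x" using B xg yg zg junction_between'[OF i x y] by blast
    thus "t0 * dist y (S (i + 1) a) \<le> dist x y" by (simp add: dist_commute)
  qed
qed

end

context qarc begin

lemma S_inj: "i \<in> {1..N} \<Longrightarrow> inj (S i)"
  using Sinj by (meson injI)

lemma two_pts: "\<exists>u0\<in>\<gamma>. \<exists>u1\<in>\<gamma>. u0 \<noteq> u1"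
proof -
  obtain u0 u1 where "u0 \<in> \<gamma>" "u1 \<in> \<gamma>" "hh u0 = 0" "hh u1 = 1"
    using hh_img by (metis atLeastAtMost_iff image_iff order_refl zero_le_one)
  hence "u0 \<noteq> u1" by (metis zero_neq_one)
  thus ?thesis using \<open>u0 \<in> \<gamma>\<close> \<open>u1 \<in> \<gamma>\<close> by blast
qed

lemma other_pt:
  assumes X: "X \<subseteq> \<gamma>" and x1: "x1 \<in> X" and x2: "x2 \<in> X" and ne: "x1 \<noteq> x2"
  shows "\<exists>\<beta>\<in>hh ` X. \<beta> \<noteq> hh a"
proof -
  have "hh x1 \<noteq> hh x2" using ne hh_inj X x1 x2 by (meson inj_on_def subsetD)
  show ?thesis
  proof (cases "hh x1 = hh a")
    case True
    thus ?thesis using \<open>hh x1 \<noteq> hh x2\<close> x2 by (intro bexI[of _ "hh x2"]) auto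
  next
    case False
    thus ?thesis using x1 by (intro bexI[of _ "hh x1"]) auto
  qed
qed

lemma a_ne_b: "a \<noteq> b"
proof
  assume ab: "a = b"
  have o1: "1 \<in> {1..<N}" using N2 by simp
  from junc[OF this] have "S 2 a = S 1 b" by (metis one_add_one)
  hence j1: "S 2 a = a" using ab fa by simp
  have one: "1 \<in> {1..N}" and two: "2 \<in> {1..N}" using N2 by auto
  show False
  proof (cases "N \<ge> 3")
    case True
    have "2 \<in> {1..<N}" using True by simp
    from junc[OF this] have "S 3 a = S 2 b" by (metis numeral_plus_one semiring_norm(2) add.commute numeral_One numeral_Bit1 one_plus_numeral)
    hence j3: "S 3 a = a" using j1 ab by simp
    have "a \<in> S 1 ` \<gamma> \<inter> S 3 ` \<gamma>" using a_in fa j3 by (metis IntI imageI)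
    moreover have "S 1 ` \<gamma> \<inter> S 3 ` \<gamma> = {}" using True by (intro disj) auto
    ultimately show False by blast
  next
    case False
    hence N: "N = 2" using N2 by simp
    define X1 where "X1 = S 1 ` S 1 ` \<gamma>"
    define X2 where "X2 = S 1 ` S 2 ` \<gamma>"
    define X3 where "X3 = S 2 ` \<gamma>"
    have sub1: "S 1 ` \<gamma> \<subseteq> \<gamma>" and sub2: "S 2 ` \<gamma> \<subseteq> \<gamma>" using Ssub one two by auto
    have X1s: "X1 \<subseteq> S 1 ` \<gamma>" and X2s: "X2 \<subseteq> S 1 ` \<gamma>" unfolding X1_def X2_def using sub1 sub2 by auto
    have Xg: "X1 \<subseteq> \<gamma>" "X2 \<subseteq> \<gamma>" "X3 \<subseteq> \<gamma>" using X1s X2s sub1 sub2 unfolding X3_def by auto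
    have aX: "a \<in> X1" "a \<in> X2" "a \<in> X3" unfolding X1_def X2_def X3_def using a_in fa j1
      by (metis imageI)+
    from inter[OF o1] have "S 1 ` \<gamma> \<inter> S 2 ` \<gamma> = {S 2 a}" by (metis one_add_one)
    hence int12: "S 1 ` \<gamma> \<inter> S 2 ` \<gamma> = {a}" using j1 by simp
    have I12: "X1 \<inter> X2 \<subseteq> {a}"
    proof -
      have "X1 \<inter> X2 = S 1 ` (S 1 ` \<gamma> \<inter> S 2 ` \<gamma>)" unfolding X1_def X2_def
        using image_Int[OF S_inj[OF one]] by simp
      thus ?thesis using int12 fa by simp
    qed
    have I13: "X1 \<inter> X3 \<subseteq> {a}" using X1s int12 unfolding X3_def by blast
    have I23: "X2 \<inter> X3 \<subseteq> {a}" using X2s int12 unfolding X3_def by blast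
    have C: "connected X1" "connected X2" "connected X3" unfolding X1_def X2_def X3_def
      using SS_conn[OF one one] SS_conn[OF one two] S_conn[OF two] by auto
    have IV: "is_interval (hh ` X1)" "is_interval (hh ` X2)" "is_interval (hh ` X3)"
      using hh_interval Xg C by auto
    have HI: "hh ` Xk \<inter> hh ` Xl \<subseteq> {hh a}" if "Xk \<subseteq> \<gamma>" "Xl \<subseteq> \<gamma>" "Xk \<inter> Xl \<subseteq> {a}" for Xk Xl
      using inj_on_image_Int[OF hh_inj that(1,2)] that(3) by auto
    obtain u0 u1 where u: "u0 \<in> \<gamma>" "u1 \<in> \<gamma>" "u0 \<noteq> u1" using two_pts by blast
    have d1: "S 1 (S 1 u0) \<noteq> S 1 (S 1 u1)" using u Sinj[OF one] by metis
    have d2: "S 1 (S 2 u0) \<noteq> S 1 (S 2 u1)" using u Sinj[OF one] Sinj[OF two] by metis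
    have d3: "S 2 u0 \<noteq> S 2 u1" using u Sinj[OF two] by metis
    obtain \<beta>1 where b1: "\<beta>1 \<in> hh ` X1" "\<beta>1 \<noteq> hh a"
      using other_pt[OF Xg(1) _ _ d1] u unfolding X1_def by blast
    obtain \<beta>2 where b2: "\<beta>2 \<in> hh ` X2" "\<beta>2 \<noteq> hh a"
      using other_pt[OF Xg(2) _ _ d2] u unfolding X2_def by blast
    obtain \<beta>3 where b3: "\<beta>3 \<in> hh ` X3" "\<beta>3 \<noteq> hh a"
      using other_pt[OF Xg(3) _ _ d3] u unfolding X3_def by blast
    have s12: "\<beta>1 < hh a \<longleftrightarrow> hh a < \<beta>2"
      by (rule same_side[OF IV(1,2)]) (use aX b1 b2 HI[OF Xg(1,2) I12] in auto)
    have s13: "\<beta>1 < hh a \<longleftrightarrow> hh a < \<beta>3"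
      by (rule same_side[OF IV(1,3)]) (use aX b1 b3 HI[OF Xg(1,3) I13] in auto)
    have s23: "\<beta>2 < hh a \<longleftrightarrow> hh a < \<beta>3"
      by (rule same_side[OF IV(2,3)]) (use aX b2 b3 HI[OF Xg(2,3) I23] in auto)
    show False using s12 s13 s23 b2(2) by auto
  qed
qed

end

context qarc begin

lemma phi_piece:
  assumes i: "i \<in> {1..N}" and "c (i - 1) \<le> x" "x \<le> c i"
  shows "phi x \<in> S i ` \<gamma>"
proof -
  obtain y where y: "y \<in> {0..1}" "x = c (i - 1) + p i * y" using decomp[OF assms] by blast
  thus ?thesis using phi_FE[OF i y(1)] phi_in[OF y(1)] by simp
qed

lemma S_compact: "i \<in> {1..N} \<Longrightarrow> compact (S i ` \<gamma>)"
  using compact_continuous_image[OF Scont gcomp] by blast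

lemma d0_ex: "\<exists>d0>0. \<forall>i\<in>{1..N}. \<forall>j\<in>{1..N}. i + 2 \<le> j \<longrightarrow> (\<forall>x\<in>S i ` \<gamma>. \<forall>y\<in>S j ` \<gamma>. d0 \<le> dist x y)"
proof -
  define P where "P = {ij. fst ij \<in> {1..N} \<and> snd ij \<in> {1..N} \<and> fst ij + 2 \<le> snd ij}"
  have "P \<subseteq> {1..N} \<times> {1..N}" unfolding P_def by (simp add: subset_iff mem_Times_iff)
  hence fin: "finite P" by (rule finite_subset) simp
  have "\<forall>ij\<in>P. \<exists>d. d > 0 \<and> (\<forall>x\<in>S (fst ij) ` \<gamma>. \<forall>y\<in>S (snd ij) ` \<gamma>. d \<le> dist x y)"
  proof
    fix ij assume ij: "ij \<in> P"
    have i: "fst ij \<in> {1..N}" and j: "snd ij \<in> {1..N}" and ijl: "fst ij + 2 \<le> snd ij"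
      using ij unfolding P_def by auto
    have "\<bar>int (fst ij) - int (snd ij)\<bar> > 1" using ijl by linarith
    hence "S (fst ij) ` \<gamma> \<inter> S (snd ij) ` \<gamma> = {}" by (rule disj[OF i j])
    from separate_compact_closed[OF S_compact[OF i] compact_imp_closed[OF S_compact[OF j]] this]
    show "\<exists>d. d > 0 \<and> (\<forall>x\<in>S (fst ij) ` \<gamma>. \<forall>y\<in>S (snd ij) ` \<gamma>. d \<le> dist x y)" by blast
  qed
  hence "\<exists>dd. \<forall>ij\<in>P. dd ij > 0 \<and> (\<forall>x\<in>S (fst ij) ` \<gamma>. \<forall>y\<in>S (snd ij) ` \<gamma>. dd ij \<le> dist x y)"
    by (rule bchoice)
  then obtain dd where dd0: "\<forall>ij\<in>P. dd ij > 0 \<and> (\<forall>x\<in>S (fst ij) ` \<gamma>. \<forall>y\<in>S (snd ij) ` \<gamma>. dd ij \<le> dist x y)"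
    by (elim exE)
  have dd: "dd ij > 0 \<and> (\<forall>x\<in>S (fst ij) ` \<gamma>. \<forall>y\<in>S (snd ij) ` \<gamma>. dd ij \<le> dist x y)" if "ij \<in> P" for ij
    using dd0 that by (rule bspec)
  define d0 where "d0 = Min (insert 1 (dd ` P))"
  have fin2: "finite (insert 1 (dd ` P))" using fin by simp
  have "d0 \<in> insert 1 (dd ` P)" unfolding d0_def by (rule Min_in[OF fin2]) simp
  then consider "d0 = 1" | ij where "ij \<in> P" "d0 = dd ij" by blast
  hence d0pos: "d0 > 0"
  proof cases
    case 1 thus ?thesis by simp
  next
    case (2 ij) thus ?thesis using dd[OF 2(1)] by simp
  qed
  have d0le: "d0 \<le> dd ij" if "ij \<in> P" for ij unfolding d0_def by (rule Min_le[OF fin2]) (use that in simp)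
  show ?thesis
  proof (intro exI[of _ d0] conjI d0pos ballI impI)
    fix i j x y assume i: "i \<in> {1..N}" and j: "j \<in> {1..N}" and ij: "i + 2 \<le> j" and x: "x \<in> S i ` \<gamma>" and y: "y \<in> S j ` \<gamma>"
    have P: "(i, j) \<in> P" unfolding P_def using i j ij by simp
    have "\<forall>x\<in>S i ` \<gamma>. \<forall>y\<in>S j ` \<gamma>. dd (i, j) \<le> dist x y" using conjunct2[OF dd[OF P]] by simp
    hence "dd (i, j) \<le> dist x y" using x y by blast
    thus "d0 \<le> dist x y" using d0le[OF P] by linarith
  qed
qed

lemma b_notin: "b \<notin> (\<Union>k\<in>{1..<N}. S k ` \<gamma>)"
proof
  assume "b \<in> (\<Union>k\<in>{1..<N}. S k ` \<gamma>)"
  then obtain k where k: "k \<in> {1..<N}" and bk: "b \<in> S k ` \<gamma>" by blast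
  have NN: "N \<in> {1..N}" using N2 by auto
  have bN: "b \<in> S N ` \<gamma>" using b_in fb by (metis imageI)
  show False
  proof (cases "k + 1 = N")
    case True
    hence "b \<in> {S N a}" using inter[OF k] bk bN by auto
    hence "S N b = S N a" using fb by simp
    hence "b = a" using Sinj[OF NN] by blast
    thus False using a_ne_b by simp
  next
    case False
    hence "S k ` \<gamma> \<inter> S N ` \<gamma> = {}" using k NN by (intro disj) auto
    thus False using bk bN by blast
  qed
qed

lemma a_notin: "a \<notin> (\<Union>k\<in>{2..N}. S k ` \<gamma>)"
proof
  assume "a \<in> (\<Union>k\<in>{2..N}. S k ` \<gamma>)"
  then obtain k where k: "k \<in> {2..N}" and ak: "a \<in> S k ` \<gamma>" by blast
  have one: "1 \<in> {1..N}" using N2 by auto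
  have a1: "a \<in> S 1 ` \<gamma>" using a_in fa by (metis imageI)
  show False
  proof (cases "k = 2")
    case True
    have o1: "1 \<in> {1..<N}" using N2 by simp
    from inter[OF o1] have "S 1 ` \<gamma> \<inter> S 2 ` \<gamma> = {S 2 a}" by (metis one_add_one)
    hence "a = S 2 a" using a1 ak True by auto
    moreover from junc[OF o1] have "S 2 a = S 1 b" by (metis one_add_one)
    ultimately have "S 1 a = S 1 b" using fa by simp
    hence "a = b" using Sinj[OF one] by blast
    thus False using a_ne_b by simp
  next
    case False
    hence "S 1 ` \<gamma> \<inter> S k ` \<gamma> = {}" using k one by (intro disj) auto
    thus False using ak a1 by blast
  qed
qed

lemma eR_ex: "\<exists>e>0. \<forall>x\<in>{0..1}. x \<le> c (N - 1) \<longrightarrow> e \<le> dist (phi x) b"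
proof -
  have cl: "closed (\<Union>k\<in>{1..<N}. S k ` \<gamma>)"
    by (intro closed_UN ballI compact_imp_closed S_compact) auto
  obtain e where e: "e > 0" "\<forall>y\<in>(\<Union>k\<in>{1..<N}. S k ` \<gamma>). e \<le> dist b y"
    using separate_point_closed[OF cl b_notin] by blast
  show ?thesis
  proof (intro exI[of _ e] conjI e(1) ballI impI)
    fix x assume x: "x \<in> {0..1}" and xc: "x \<le> c (N - 1)"
    obtain k where k: "k \<in> {1..N}" "c (k - 1) \<le> x" "x \<le> c k" using find_int[OF x] by blast
    have "phi x \<in> (\<Union>k\<in>{1..<N}. S k ` \<gamma>)"
    proof (cases "k = N")
      case True
      hence xe: "x = c (N - 1)" using k xc by simp
      have N1: "N - 1 \<in> {1..N}" using N2 by auto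
      have "c (N - 1 - 1) \<le> c (N - 1)" by (rule c_mono) auto
      hence "c (N - 1 - 1) \<le> x" using xe by simp
      hence "phi x \<in> S (N - 1) ` \<gamma>" using phi_piece[OF N1] xe by simp
      moreover have "N - 1 \<in> {1..<N}" using N2 by auto
      ultimately show ?thesis by blast
    next
      case False
      hence "k \<in> {1..<N}" using k by auto
      thus ?thesis using phi_piece[OF k] by blast
    qed
    hence "e \<le> dist b (phi x)" using e(2) by blast
    thus "e \<le> dist (phi x) b" by (simp add: dist_commute)
  qed
qed

lemma eL_ex: "\<exists>e>0. \<forall>x\<in>{0..1}. c 1 \<le> x \<longrightarrow> e \<le> dist (phi x) a"
proof -
  have cl: "closed (\<Union>k\<in>{2..N}. S k ` \<gamma>)"
    by (intro closed_UN ballI compact_imp_closed S_compact) auto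
  obtain e where e: "e > 0" "\<forall>y\<in>(\<Union>k\<in>{2..N}. S k ` \<gamma>). e \<le> dist a y"
    using separate_point_closed[OF cl a_notin] by blast
  show ?thesis
  proof (intro exI[of _ e] conjI e(1) ballI impI)
    fix x assume x: "x \<in> {0..1}" and xc: "c 1 \<le> x"
    obtain k where k: "k \<in> {1..N}" "c (k - 1) \<le> x" "x \<le> c k" using find_int[OF x] by blast
    have "phi x \<in> (\<Union>k\<in>{2..N}. S k ` \<gamma>)"
    proof (cases "k = 1")
      case True
      hence xe: "x = c 1" using k xc by simp
      have N1: "2 \<in> {1..N}" using N2 by auto
      have "c 1 \<le> c 2" using N2 by (intro c_mono) auto
      hence "x \<le> c 2" using xe by simp
      hence "phi x \<in> S 2 ` \<gamma>" using phi_piece[OF N1] xe by simp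
      moreover have "2 \<in> {2..N}" using N2 by auto
      ultimately show ?thesis by blast
    next
      case False
      hence "k \<in> {2..N}" using k by auto
      thus ?thesis using phi_piece[OF k(1)] k by blast
    qed
    hence "e \<le> dist a (phi x)" using e(2) by blast
    thus "e \<le> dist (phi x) a" by (simp add: dist_commute)
  qed
qed

end

context qarc begin

lemma pw_le1: "0 \<le> z \<Longrightarrow> z \<le> 1 \<Longrightarrow> z powr (1/s) \<le> 1"
  using powr_mono2[of "1/s" z 1] spos by simp

lemma lowR:
  assumes e: "e > 0" and far: "\<forall>x\<in>{0..1}. x \<le> c (N - 1) \<longrightarrow> e \<le> dist (phi x) b"
    and x: "x \<in> {0..1}"
  shows "e * (1 - x) powr (1/s) \<le> dist (phi x) b"
proof -
  have N1: "N \<in> {1..N}" using N2 by auto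
  have cN1: "c (N - 1) + p N = 1" using c_diff[OF N1] cN by simp
  have farb: "e * (1 - x) powr (1/s) \<le> dist (phi x) b" if "x \<in> {0..1}" "x \<le> c (N - 1)" for x
  proof -
    have "e * (1 - x) powr (1/s) \<le> e * 1" using pw_le1[of "1 - x"] that e by (intro mult_left_mono) auto
    thus ?thesis using far that by auto
  qed
  have main: "\<forall>x\<in>{0..1}. pmax ^ k \<le> 1 - x \<longrightarrow> e * (1 - x) powr (1/s) \<le> dist (phi x) b" for k
  proof (induction k)
    case 0 show ?case using farb[of 0] c_nonneg[of "N - 1"] by auto
  next
    case (Suc k)
    show ?case
    proof (intro ballI impI)
      fix x assume x: "x \<in> {0..1}" and k: "pmax ^ Suc k \<le> 1 - x"
      show "e * (1 - x) powr (1/s) \<le> dist (phi x) b"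
      proof (cases "x \<le> c (N - 1)")
        case True thus ?thesis using farb x by blast
      next
        case False
        then obtain y where y: "y \<in> {0..1}" and xy: "x = c (N - 1) + p N * y"
          using decomp[OF N1, of x] x cN by auto
        have 1: "1 - x = p N * (1 - y)" using xy cN1 by (simp add: algebra_simps)
        have "pmax * pmax ^ k \<le> pmax * (1 - y)"
          using k 1 pm_props(5)[OF N1] y by (simp add: mult_right_mono order_trans)
        hence "pmax ^ k \<le> 1 - y" using pm_props(3) by simp
        hence IH: "e * (1 - y) powr (1/s) \<le> dist (phi y) b" using Suc.IH y by blast
        have "e * (1 - x) powr (1/s) = r N * (e * (1 - y) powr (1/s))"
          using powr_scale[OF N1, of "1 - y"] 1 y by simp
        also have "\<dots> \<le> r N * dist (phi y) b"
          using IH rpos[OF N1] by (simp add: mult_left_mono)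
        also have "\<dots> = dist (phi x) b"
          using phi_sd[OF N1 y, of 1] xy cN1 phi1b by simp
        finally show ?thesis .
      qed
    qed
  qed
  show ?thesis
  proof (cases "x = 1")
    case True thus ?thesis by simp
  next
    case False
    then obtain k where "pmax ^ k \<le> 1 - x" using exists_k[of "1 - x"] x by auto
    thus ?thesis using main x by blast
  qed
qed

lemma lowL:
  assumes e: "e > 0" and far: "\<forall>x\<in>{0..1}. c 1 \<le> x \<longrightarrow> e \<le> dist (phi x) a"
    and x: "x \<in> {0..1}"
  shows "e * x powr (1/s) \<le> dist (phi x) a"
proof -
  have N1: "1 \<in> {1..N}" using N2 by auto
  have c1: "c 1 = p 1" using c_diff[OF N1] c0 by simp
  have fara: "e * x powr (1/s) \<le> dist (phi x) a" if "x \<in> {0..1}" "c 1 \<le> x" for x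
  proof -
    have "e * x powr (1/s) \<le> e * 1" using pw_le1[of x] that e by (intro mult_left_mono) auto
    thus ?thesis using far that by auto
  qed
  have main: "\<forall>x\<in>{0..1}. pmax ^ k \<le> x \<longrightarrow> e * x powr (1/s) \<le> dist (phi x) a" for k
  proof (induction k)
    case 0 show ?case using fara[of 1] c_le1[of 1] N2 by auto
  next
    case (Suc k)
    show ?case
    proof (intro ballI impI)
      fix x assume x: "x \<in> {0..1}" and k: "pmax ^ Suc k \<le> x"
      show "e * x powr (1/s) \<le> dist (phi x) a"
      proof (cases "c 1 \<le> x")
        case True thus ?thesis using fara x by blast
      next
        case False
        then obtain y where y: "y \<in> {0..1}" and xy: "x = c (1 - 1) + p 1 * y"
          using decomp[OF N1, of x] x c0 by auto
        have 1: "x = p 1 * y" using xy c0 by simp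
        have "pmax * pmax ^ k \<le> pmax * y"
          using k 1 pm_props(5)[OF N1] y by (simp add: mult_right_mono order_trans)
        hence "pmax ^ k \<le> y" using pm_props(3) by simp
        hence IH: "e * y powr (1/s) \<le> dist (phi y) a" using Suc.IH y by blast
        have "e * x powr (1/s) = r 1 * (e * y powr (1/s))"
          using powr_scale[OF N1, of y] 1 y by simp
        also have "\<dots> \<le> r 1 * dist (phi y) a"
          using IH rpos[OF N1] by (simp add: mult_left_mono)
        also have "\<dots> = dist (phi x) a"
          using phi_sd[OF N1 y, of 0] xy c0 phi0a by simp
        finally show ?thesis .
      qed
    qed
  qed
  show ?thesis
  proof (cases "x = 0")
    case True thus ?thesis by simp
  next
    case False
    then obtain k where "pmax ^ k \<le> x" using exists_k[of x] x by auto
    thus ?thesis using main x by blast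
  qed
qed

end

context qarc begin

lemma low_adj:
  assumes t0: "t0 > 0"
    and J: "\<forall>i\<in>{1..<N}. \<forall>x\<in>S i ` \<gamma>. \<forall>y\<in>S (i + 1) ` \<gamma>.
      t0 * dist x (S (i + 1) a) \<le> dist x y \<and> t0 * dist y (S (i + 1) a) \<le> dist x y"
    and e: "e > 0" and farR: "\<forall>x\<in>{0..1}. x \<le> c (N - 1) \<longrightarrow> e \<le> dist (phi x) b"
    and farL: "\<forall>x\<in>{0..1}. c 1 \<le> x \<longrightarrow> e \<le> dist (phi x) a"
    and i: "i \<in> {1..<N}" and t1: "c (i - 1) \<le> t" and t2: "t \<le> c i" and u1: "c i \<le> u" and u2: "u \<le> c (i + 1)"
    and tu: "t < u"
  shows "t0 * e * ((u - t) / 2) powr (1/s) \<le> dist (phi t) (phi u)"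
proof -
  have i1: "i \<in> {1..N}" "i + 1 \<in> {1..N}" using i by auto
  have cu: "c (i + 1 - 1) \<le> u" using u1 by simp
  have xin: "phi t \<in> S i ` \<gamma>" using phi_piece[OF i1(1) t1 t2] .
  have yin: "phi u \<in> S (i + 1) ` \<gamma>" using phi_piece[OF i1(2) cu u2] .
  have z: "phi (c i) = S (i + 1) a" using adj_pt(2)[OF i] .
  have Jx: "t0 * dist (phi t) (phi (c i)) \<le> dist (phi t) (phi u)"
    and Jy: "t0 * dist (phi u) (phi (c i)) \<le> dist (phi t) (phi u)"
    using J i xin yin z by auto
  note L = adj_left[OF i1(1) t1 t2]
  note R = adj_right[OF i1(2) cu u2]
  let ?x = "(t - c (i - 1)) / p i" and ?y = "(u - c (i + 1 - 1)) / p (i + 1)"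
  have y01: "?y \<in> {0..1}"
  proof -
    have "c (i + 1) = c (i + 1 - 1) + p (i + 1)" using c_diff[OF i1(2)] .
    thus ?thesis using cu u2 p_pos[OF i1(2)] by (auto simp: field_simps)
  qed
  have dxz: "e * (c i - t) powr (1/s) \<le> dist (phi t) (phi (c i))"
  proof -
    have "e * (c i - t) powr (1/s) = r i * (e * (1 - ?x) powr (1/s))"
      using powr_scale[OF i1(1), of "1 - ?x"] L(2,3) by simp
    also have "\<dots> \<le> r i * dist (phi ?x) b"
      using lowR[OF e farR L(2)] rpos[OF i1(1)] by (simp add: mult_left_mono)
    also have "\<dots> = dist (phi t) (phi (c i))" using L(1) by simp
    finally show ?thesis .
  qed
  have dyz: "e * (u - c i) powr (1/s) \<le> dist (phi u) (phi (c i))"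
  proof -
    have "e * (u - c i) powr (1/s) = r (i + 1) * (e * ?y powr (1/s))"
      using powr_scale[OF i1(2), of ?y] R(2) y01 by simp
    also have "\<dots> \<le> r (i + 1) * dist (phi ?y) a"
      using lowL[OF e farL y01] rpos[OF i1(2)] by (simp add: mult_left_mono)
    also have "\<dots> = dist (phi u) (phi (c i))" using R(1) by simp
    finally show ?thesis .
  qed
  show ?thesis
  proof (cases "(u - t) / 2 \<le> c i - t")
    case True
    have "((u - t) / 2) powr (1/s) \<le> (c i - t) powr (1/s)" using True tu spos by (intro powr_mono2) auto
    hence "t0 * e * ((u - t) / 2) powr (1/s) \<le> t0 * (e * (c i - t) powr (1/s))"
      using t0 e by (simp add: mult_left_mono)
    also have "\<dots> \<le> t0 * dist (phi t) (phi (c i))" using dxz t0 by (simp add: mult_left_mono)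
    finally show ?thesis using Jx by linarith
  next
    case False
    hence F: "(u - t) / 2 \<le> u - c i" by simp
    have "((u - t) / 2) powr (1/s) \<le> (u - c i) powr (1/s)" using F tu spos by (intro powr_mono2) auto
    hence "t0 * e * ((u - t) / 2) powr (1/s) \<le> t0 * (e * (u - c i) powr (1/s))"
      using t0 e by (simp add: mult_left_mono)
    also have "\<dots> \<le> t0 * dist (phi u) (phi (c i))" using dyz t0 by (simp add: mult_left_mono)
    finally show ?thesis using Jy by linarith
  qed
qed

lemma low2_lt:
  assumes t0: "t0 > 0"
    and J: "\<forall>i\<in>{1..<N}. \<forall>x\<in>S i ` \<gamma>. \<forall>y\<in>S (i + 1) ` \<gamma>.
      t0 * dist x (S (i + 1) a) \<le> dist x y \<and> t0 * dist y (S (i + 1) a) \<le> dist x y"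
    and e: "e > 0" and farR: "\<forall>x\<in>{0..1}. x \<le> c (N - 1) \<longrightarrow> e \<le> dist (phi x) b"
    and farL: "\<forall>x\<in>{0..1}. c 1 \<le> x \<longrightarrow> e \<le> dist (phi x) a"
    and d0: "d0 > 0" and D0: "\<forall>i\<in>{1..N}. \<forall>j\<in>{1..N}. i + 2 \<le> j \<longrightarrow> (\<forall>x\<in>S i ` \<gamma>. \<forall>y\<in>S j ` \<gamma>. d0 \<le> dist x y)"
    and t: "t \<in> {0..1}" and u: "u \<in> {0..1}" and tu: "t < u"
  shows "min d0 (t0 * e / 2 powr (1/s)) * (u - t) powr (1/s) \<le> dist (phi t) (phi u)"
proof -
  define cl where "cl = min d0 (t0 * e / 2 powr (1/s))"
  have cl0: "0 \<le> cl" unfolding cl_def using d0 t0 e by simp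
  have nonsame: "cl * (u - t) powr (1/s) \<le> dist (phi t) (phi u)"
    if t: "t \<in> {0..1}" and u: "u \<in> {0..1}" and tu: "t < u" and
      cs: "(\<exists>i. i \<in> {1..<N} \<and> c (i - 1) \<le> t \<and> t \<le> c i \<and> c i \<le> u \<and> u \<le> c (i + 1)) \<or>
       (\<exists>i j. i \<in> {1..N} \<and> j \<in> {1..N} \<and> i + 2 \<le> j \<and> c (i - 1) \<le> t \<and> t \<le> c i \<and> c (j - 1) \<le> u \<and> u \<le> c j)"
    for t u
  proof -
    from cs show ?thesis
    proof
      assume "\<exists>i. i \<in> {1..<N} \<and> c (i - 1) \<le> t \<and> t \<le> c i \<and> c i \<le> u \<and> u \<le> c (i + 1)"
      then obtain i where i: "i \<in> {1..<N}" "c (i - 1) \<le> t" "t \<le> c i" "c i \<le> u" "u \<le> c (i + 1)" by blast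
      have "cl * (u - t) powr (1/s) \<le> (t0 * e / 2 powr (1/s)) * (u - t) powr (1/s)"
        unfolding cl_def by (intro mult_right_mono) auto
      also have "\<dots> = t0 * e * ((u - t) / 2) powr (1/s)" using tu by (simp add: powr_divide)
      also have "\<dots> \<le> dist (phi t) (phi u)" by (rule low_adj[OF t0 J e farR farL i tu])
      finally show ?thesis .
    next
      assume "\<exists>i j. i \<in> {1..N} \<and> j \<in> {1..N} \<and> i + 2 \<le> j \<and> c (i - 1) \<le> t \<and> t \<le> c i \<and> c (j - 1) \<le> u \<and> u \<le> c j"
      then obtain i j where ij: "i \<in> {1..N}" "j \<in> {1..N}" "i + 2 \<le> j" "c (i - 1) \<le> t" "t \<le> c i"
        "c (j - 1) \<le> u" "u \<le> c j" by blast
      have xin: "phi t \<in> S i ` \<gamma>" using phi_piece[OF ij(1,4,5)] .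
      have yin: "phi u \<in> S j ` \<gamma>" using phi_piece[OF ij(2,6,7)] .
      have "d0 \<le> dist (phi t) (phi u)" using D0 ij xin yin by blast
      moreover have "cl * (u - t) powr (1/s) \<le> d0 * 1"
        using pw_le1[of "u - t"] t u tu cl0 unfolding cl_def by (intro mult_mono) auto
      ultimately show ?thesis by simp
    qed
  qed
  have main: "\<forall>t\<in>{0..1}. \<forall>u\<in>{0..1}. t < u \<longrightarrow> pmax ^ k \<le> u - t \<longrightarrow>
      cl * (u - t) powr (1/s) \<le> dist (phi t) (phi u)" for k
  proof (induction k)
    case 0
    show ?case
    proof (intro ballI impI)
      fix t u assume t: "t \<in> {0..1}" and u: "u \<in> {0..1}" and tu: "t < u" and k: "pmax ^ 0 \<le> u - t"
      from t u tu show "cl * (u - t) powr (1/s) \<le> dist (phi t) (phi u)"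
      proof (cases rule: cases_int)
        case (same i)
        have "c i = c (i - 1) + p i" using c_diff[OF same(1)] .
        hence "u - t \<le> p i" using same by simp
        thus ?thesis using p_lt1[OF same(1)] k by simp
      next
        case (adj i) thus ?thesis using nonsame[OF t u tu] by blast
      next
        case (far i j) thus ?thesis using nonsame[OF t u tu] by blast
      qed
    qed
  next
    case (Suc k)
    show ?case
    proof (intro ballI impI)
      fix t u assume t: "t \<in> {0..1}" and u: "u \<in> {0..1}" and tu: "t < u" and k: "pmax ^ Suc k \<le> u - t"
      from t u tu show "cl * (u - t) powr (1/s) \<le> dist (phi t) (phi u)"
      proof (cases rule: cases_int)
        case (same i)
        have pp: "0 < p i" using p_pos[OF same(1)] .
        have ci: "c i = c (i - 1) + p i" using c_diff[OF same(1)] .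
        let ?x = "(t - c (i - 1)) / p i" and ?y = "(u - c (i - 1)) / p i"
        have x: "?x \<in> {0..1}" and y: "?y \<in> {0..1}" using same tu pp ci by (auto simp: field_simps)
        have xy: "?x < ?y" using tu pp by (simp add: divide_strict_right_mono)
        have uy: "u - t = p i * (?y - ?x)" using pp by (simp add: field_simps)
        have "pmax * pmax ^ k \<le> pmax * (?y - ?x)"
          using k uy pm_props(5)[OF same(1)] xy by (simp add: mult_right_mono order_trans)
        hence "pmax ^ k \<le> ?y - ?x" using pm_props(3) by simp
        hence IH: "cl * (?y - ?x) powr (1/s) \<le> dist (phi ?x) (phi ?y)" using Suc.IH x y xy by blast
        have "cl * (u - t) powr (1/s) = r i * (cl * (?y - ?x) powr (1/s))"
          using powr_scale[OF same(1), of "?y - ?x"] uy xy by simp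
        also have "\<dots> \<le> r i * dist (phi ?x) (phi ?y)"
          using IH rpos[OF same(1)] by (simp add: mult_left_mono)
        also have "\<dots> = dist (phi t) (phi u)"
          using phi_sd[OF same(1) x y] pp by simp
        finally show ?thesis .
      next
        case (adj i) thus ?thesis using nonsame[OF t u tu] by blast
      next
        case (far i j) thus ?thesis using nonsame[OF t u tu] by blast
      qed
    qed
  qed
  obtain k where "pmax ^ k \<le> u - t" using exists_k[of "u - t"] tu by auto
  thus ?thesis using main t u tu unfolding cl_def by blast
qed

lemma snowflake:
  "\<exists>f cl C. cl > 0 \<and> C > 0 \<and> f ` {0..1} = \<gamma> \<and>
     (\<forall>t\<in>{0..1}. \<forall>u\<in>{0..1}. cl * \<bar>t - u\<bar> powr (1/s) \<le> dist (f t) (f u) \<and>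
        dist (f t) (f u) \<le> C * \<bar>t - u\<bar> powr (1/s))"
proof -
  obtain t0 where t0: "t0 > 0" and J: "\<forall>i\<in>{1..<N}. \<forall>x\<in>S i ` \<gamma>. \<forall>y\<in>S (i + 1) ` \<gamma>.
      t0 * dist x (S (i + 1) a) \<le> dist x y \<and> t0 * dist y (S (i + 1) a) \<le> dist x y"
    using junction_const by blast
  obtain eR where eR: "eR > 0" "\<forall>x\<in>{0..1}. x \<le> c (N - 1) \<longrightarrow> eR \<le> dist (phi x) b" using eR_ex by blast
  obtain eL where eL: "eL > 0" "\<forall>x\<in>{0..1}. c 1 \<le> x \<longrightarrow> eL \<le> dist (phi x) a" using eL_ex by blast
  obtain d0 where d0: "d0 > 0" and D0: "\<forall>i\<in>{1..N}. \<forall>j\<in>{1..N}. i + 2 \<le> j \<longrightarrow> (\<forall>x\<in>S i ` \<gamma>. \<forall>y\<in>S j ` \<gamma>. d0 \<le> dist x y)"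
    using d0_ex by blast
  define e where "e = min eR eL"
  have e: "e > 0" using eR eL unfolding e_def by simp
  have fR: "\<forall>x\<in>{0..1}. x \<le> c (N - 1) \<longrightarrow> e \<le> dist (phi x) b" using eR unfolding e_def by force
  have fL: "\<forall>x\<in>{0..1}. c 1 \<le> x \<longrightarrow> e \<le> dist (phi x) a" using eL unfolding e_def by force
  define cl where "cl = min d0 (t0 * e / 2 powr (1/s))"
  have clpos: "cl > 0" unfolding cl_def using d0 t0 e by simp
  have low: "cl * \<bar>t - u\<bar> powr (1/s) \<le> dist (phi t) (phi u)" if t: "t \<in> {0..1}" and u: "u \<in> {0..1}" for t u
  proof -
    consider "t < u" | "t = u" | "u < t" by linarith
    thus ?thesis
    proof cases
      case 1 thus ?thesis using low2_lt[OF t0 J e fR fL d0 D0 t u] unfolding cl_def by (simp add: abs_if)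
    next
      case 2 thus ?thesis by simp
    next
      case 3 thus ?thesis using low2_lt[OF t0 J e fR fL d0 D0 u t] unfolding cl_def
        by (simp add: abs_if dist_commute)
    qed
  qed
  have up: "dist (phi t) (phi u) \<le> (2 * E + 1) * \<bar>t - u\<bar> powr (1/s)" if t: "t \<in> {0..1}" and u: "u \<in> {0..1}" for t u
  proof -
    have "dist (phi t) (phi u) \<le> 2 * E * \<bar>t - u\<bar> powr (1/s)" by (rule up2[OF t u])
    also have "\<dots> \<le> (2 * E + 1) * \<bar>t - u\<bar> powr (1/s)" by (simp add: mult_right_mono)
    finally show ?thesis .
  qed
  show ?thesis
    by (intro exI[of _ phi] exI[of _ cl] exI[of _ "2 * E + 1"] conjI clpos phi_img ballI low up)
       (use E_nonneg in auto)
qed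

end

lemma quasiarc_snow:
  fixes S :: "nat \<Rightarrow> 'a::euclidean_space \<Rightarrow> 'a"
  assumes q: "IFS_quasiarc N S r \<gamma>"
  shows "\<exists>f cl C. cl > 0 \<and> C > 0 \<and> f ` {0..1} = \<gamma> \<and>
     (\<forall>t\<in>{0..1}. \<forall>u\<in>{0..1}. cl * \<bar>t - u\<bar> powr (1 / similarity_dimension N r) \<le> dist (f t) (f u) \<and>
        dist (f t) (f u) \<le> C * \<bar>t - u\<bar> powr (1 / similarity_dimension N r))"
proof -
  have arc: "IFS_arc N S r \<gamma>" and qse: "quasisymmetrically_equivalent \<gamma> {0..1::real}"
    using q unfolding IFS_quasiarc_def by auto
  have con: "contracting_IFS N S r" and inv: "invariant_set N S \<gamma>"
    using arc unfolding IFS_arc_def by auto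
  obtain a b where ab: "S 1 a = a" "S N b = b" "\<forall>i\<in>{1..<N}. S i b = S (i+1) a"
      "\<forall>i\<in>{1..<N}. S i ` \<gamma> \<inter> S (i+1) ` \<gamma> = {S (i+1) a}"
      "\<forall>i\<in>{1..N}. \<forall>j\<in>{1..N}. \<bar>int i - int j\<bar> > 1 \<longrightarrow> S i ` \<gamma> \<inter> S j ` \<gamma> = {}"
    using arc unfolding IFS_arc_def by blast
  have N2: "N \<ge> 2" and rr: "\<forall>i\<in>{1..N}. 0 < r i \<and> r i < 1 \<and> similarity_with_ratio (S i) (r i)"
    using con unfolding contracting_IFS_def by auto
  have sd: "similarity_dimension N r > 0 \<and> (\<Sum>i=1..N. r i powr similarity_dimension N r) = 1"
    using simdim[OF N2] rr by blast
  have "qarc N S r \<gamma> (similarity_dimension N r) a b"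
    by (unfold_locales) (use N2 rr inv sd ab qse in \<open>auto simp: invariant_set_def\<close>)
  thus ?thesis by (rule qarc.snowflake)
qed

theorem corollary1p6:
  fixes S :: "nat \<Rightarrow> 'a::euclidean_space \<Rightarrow> 'a" and \<alpha> :: "'a set"
    and S' :: "nat \<Rightarrow> 'b::euclidean_space \<Rightarrow> 'b" and \<beta> :: "'b set"
    and r r' :: "nat \<Rightarrow> real" and N M :: nat
  assumes "IFS_quasiarc N S r \<alpha>"
    and "IFS_quasiarc M S' r' \<beta>"
    and "similarity_dimension N r = similarity_dimension M r'"
  shows "bi_lipschitz_equivalent \<alpha> \<beta>"
proof -
  define e where "e = 1 / similarity_dimension N r"
  obtain \<phi> c1 C1 where c1: "c1 > 0" "C1 > 0" and phi_img: "\<phi> ` {0..1} = \<alpha>"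
    and phib: "\<And>t u. t \<in> {0..1} \<Longrightarrow> u \<in> {0..1} \<Longrightarrow> c1 * \<bar>t - u\<bar> powr e \<le> dist (\<phi> t) (\<phi> u) \<and>
        dist (\<phi> t) (\<phi> u) \<le> C1 * \<bar>t - u\<bar> powr e"
    using quasiarc_snow[OF assms(1)] unfolding e_def by blast
  obtain \<psi> c2 C2 where c2: "c2 > 0" "C2 > 0" and psi_img: "\<psi> ` {0..1} = \<beta>"
    and psib: "\<And>t u. t \<in> {0..1} \<Longrightarrow> u \<in> {0..1} \<Longrightarrow> c2 * \<bar>t - u\<bar> powr e \<le> dist (\<psi> t) (\<psi> u) \<and>
        dist (\<psi> t) (\<psi> u) \<le> C2 * \<bar>t - u\<bar> powr e"
    using quasiarc_snow[OF assms(2)] unfolding e_def assms(3) by blast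
  have inj: "inj_on \<phi> {0..1}"
  proof (rule inj_onI)
    fix t u assume t: "t \<in> {0..1}" and u: "u \<in> {0..1}" and eq: "\<phi> t = \<phi> u"
    have "c1 * \<bar>t - u\<bar> powr e \<le> 0" using phib[OF t u] eq by simp
    hence "\<bar>t - u\<bar> powr e \<le> 0" using c1 by (simp add: mult_le_0_iff)
    hence "\<bar>t - u\<bar> powr e = 0" by (meson antisym powr_ge_zero)
    thus "t = u" by simp
  qed
  define g where "g = inv_into {0..1} \<phi>"
  have g: "g (\<phi> t) = t" if "t \<in> {0..1}" for t unfolding g_def using inv_into_f_f[OF inj that] .
  define f where "f = (\<lambda>x. \<psi> (g x))"
  define C where "C = max (C2 / c1) (C1 / c2)"
  have Cpos: "C > 0" unfolding C_def using c1 c2 by (simp add: less_max_iff_disj)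
  show ?thesis
    unfolding bi_lipschitz_equivalent_def
  proof (intro exI[of _ f] conjI exI[of _ C] Cpos ballI)
    have "f ` \<alpha> = (\<lambda>x. \<psi> (g (\<phi> x))) ` {0..1}" unfolding phi_img[symmetric] f_def image_image ..
    also have "\<dots> = \<psi> ` {0..1}" by (rule image_cong) (auto simp: g)
    finally have "f ` \<alpha> = \<psi> ` {0..1}" .
    thus "f ` \<alpha> = \<beta>" using psi_img by simp
    fix x y assume x: "x \<in> \<alpha>" and y: "y \<in> \<alpha>"
    obtain t where t: "t \<in> {0..1}" "x = \<phi> t" using x phi_img by auto
    obtain u where u: "u \<in> {0..1}" "y = \<phi> u" using y phi_img by auto
    have fx: "f x = \<psi> t" and fy: "f y = \<psi> u" unfolding f_def using g t u by auto
    let ?z = "\<bar>t - u\<bar> powr e"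
    have z0: "0 \<le> ?z" by simp
    have A: "dist (f x) (f y) \<le> C2 * ?z" using psib[OF t(1) u(1)] fx fy by simp
    have B: "c1 * ?z \<le> dist x y" using phib[OF t(1) u(1)] t u by simp
    have A': "c2 * ?z \<le> dist (f x) (f y)" using psib[OF t(1) u(1)] fx fy by simp
    have B': "dist x y \<le> C1 * ?z" using phib[OF t(1) u(1)] t u by simp
    have "dist (f x) (f y) \<le> C2 * ?z" by (rule A)
    also have "\<dots> = (C2 / c1) * (c1 * ?z)" using c1 by simp
    also have "\<dots> \<le> (C2 / c1) * dist x y" using B c1 c2 by (intro mult_left_mono) auto
    also have "\<dots> \<le> C * dist x y" unfolding C_def by (intro mult_right_mono) auto
    finally show "dist (f x) (f y) \<le> C * dist x y" .
    have "dist x y / C \<le> dist x y / (C1 / c2)" using c1 c2 Cpos unfolding C_def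
      by (intro divide_left_mono) auto
    also have "\<dots> = (c2 / C1) * dist x y" by simp
    also have "\<dots> \<le> (c2 / C1) * (C1 * ?z)" using B' c1 c2 by (intro mult_left_mono) auto
    also have "\<dots> = c2 * ?z" using c1 by simp
    also have "\<dots> \<le> dist (f x) (f y)" by (rule A')
    finally show "dist x y / C \<le> dist (f x) (f y)" .
  qed
qed

end
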